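(* Let $\operatorname{char}K\ne2$ and let $\mathbf J=\mathrm{Kan}(\mathbf P)$. Then $\mathbf J=\bigoplus_{n_1,n_2,n_3,n_4\ge0}\mathbf J_{n_1n_2n_3n_4}$, the $\mathbb N_0^4$-grading by multidegree in the generators $V_0,V_1,V_2,\bar1$, and the set of dimensions $\{\dim_K\mathbf J_{n_1n_2n_3n_4}\mid(n_1,n_2,n_3,n_4)\in\mathbb N_0^4\}$ is unbounded.
   Context: $H_\infty=\Lambda(x_i,y_i\mid i\ge0)$ is the Grassmann algebra over $K$ on odd generators with Poisson bracket $\{y_i,x_j\}=\delta_{ij}$, $\{x_i,x_j\}=\{y_i,y_j\}=0$; $\widetilde H$ is its completion by formal sums $c\cdot1+\sum\lambda_{\alpha,\beta}x^\alpha y^\beta$ over monomials with $\beta\ne0$ and (largest index in $\alpha$) $<$ (largest index in $\beta$). $V_i=\sum_{k\ge0}\big(\prod_{n=0}^{k-1}x_{i+3n}x_{i+3n+1}\big)y_{i+3k}$; $\mathbf P$ is the smallest unital subalgebra of $\widetilde H$ containing $V_0,V_1,V_2$ closed under product and bracket. $\mathrm{Kan}(\mathbf P)=\mathbf P\oplus\bar{\mathbf P}$ with $|\bar a|=1-|a|$ and $a\bullet b=ab$, $\bar a\bullet b=(-1)^{|b|}\overline{ab}$, $a\bullet\bar b=\overline{ab}$, $\bar a\bullet\bar b=(-1)^{|b|}\{a,b\}$; it is generated by $V_0,V_1,V_2,\bar1$, and $\mathbf J_{n_1n_2n_3n_4}$ is the span of Jordan products with $n_1,n_2,n_3,n_4$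 occurrences of $V_0,V_1,V_2,\bar1$ respectively. *)

theory Defs
  imports Main "HOL.Vector_Spaces" "HOL-Library.Function_Algebras" "HOL-Library.Product_Plus"
          "HOL-Library.Groups_Big_Fun"
begin

text \<open>A monomial x^\<alpha> y^\<beta> of the Grassmann algebra H = \<Lambda>(x_i, y_i | i \<ge> 0) is encoded by the
  pair (\<alpha>, \<beta>) of finite index sets; it stands for the ordered product
  x_{a1} ... x_{ak} y_{b1} ... y_{bl} with a1 < ... < ak and b1 < ... < bl.
  A (formal, possibly infinite) sum is a coefficient function on monomials.\<close>

type_synonym mon = "nat set \<times> nat set"
type_synonym 'k ser = "mon \<Rightarrow> 'k"

definition admissible :: "mon \<Rightarrow> bool" where
  "admissible m \<longleftrightarrow> finite (fst m) \<and> finite (snd m) \<and>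
     ((fst m = {} \<and> snd m = {}) \<or> (snd m \<noteq> {} \<and> (\<forall>a\<in>fst m. a < Max (snd m))))"

definition Htilde :: "'k::field ser set" where
  "Htilde = {f. \<forall>m. f m \<noteq> 0 \<longrightarrow> admissible m}"

text \<open>Number of pairs (a,b) with a \<in> A, b \<in> B, b < a: sorting x^A x^B into x^(A \<union> B)
  (for disjoint A, B) produces the sign (-1)^inv A B.\<close>
definition inv :: "nat set \<Rightarrow> nat set \<Rightarrow> nat" where
  "inv A B = card {(a, b). a \<in> A \<and> b \<in> B \<and> b < a}"

text \<open>Sign of x^\<alpha>1 y^\<beta>1 * x^\<alpha>2 y^\<beta>2 = sign * x^(\<alpha>1\<union>\<alpha>2) y^(\<beta>1\<union>\<beta>2) (disjoint case).\<close>
definition msign :: "mon \<Rightarrow> mon \<Rightarrow> 'k::field" where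
  "msign m1 m2 = (-1) ^ (card (snd m1) * card (fst m2) + inv (fst m1) (fst m2) + inv (snd m1) (snd m2))"

definition smul :: "'k::field ser \<Rightarrow> 'k ser \<Rightarrow> 'k ser" where
  "smul f g m = (\<Sum>a1\<in>Pow (fst m). \<Sum>b1\<in>Pow (snd m).
      msign (a1, b1) (fst m - a1, snd m - b1) * f (a1, b1) * g (fst m - a1, snd m - b1))"

text \<open>Right derivatives (f \<partial>/\<partial>y_i from the right, f \<partial>/\<partial>x_i from the right) and
  left derivatives (\<partial>/\<partial>x_i g, \<partial>/\<partial>y_i g from the left) of formal sums.\<close>
definition dRy :: "nat \<Rightarrow> 'k::field ser \<Rightarrow> 'k ser" where
  "dRy i f m = (if i \<in> snd m then 0
     else (-1) ^ card {b \<in> snd m. i < b} * f (fst m, insert i (snd m)))"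

definition dRx :: "nat \<Rightarrow> 'k::field ser \<Rightarrow> 'k ser" where
  "dRx i f m = (if i \<in> fst m then 0
     else (-1) ^ (card {a \<in> fst m. i < a} + card (snd m)) * f (insert i (fst m), snd m))"

definition dLx :: "nat \<Rightarrow> 'k::field ser \<Rightarrow> 'k ser" where
  "dLx i g m = (if i \<in> fst m then 0
     else (-1) ^ card {a \<in> fst m. a < i} * g (insert i (fst m), snd m))"

definition dLy :: "nat \<Rightarrow> 'k::field ser \<Rightarrow> 'k ser" where
  "dLy i g m = (if i \<in> snd m then 0
     else (-1) ^ (card (fst m) + card {b \<in> snd m. b < i}) * g (fst m, insert i (snd m)))"

text \<open>Poisson bracket determined by {y_i, x_j} = {x_j, y_i} = \<delta>_ij, {x_i,x_j} = {y_i,y_j} = 0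
  (odd generators, even super-Lie bracket):
  {f, g} = \<Sum>_i ( (f \<partial>\<leftarrow>_{y_i}) (\<partial>\<rightarrow>_{x_i} g) + (f \<partial>\<leftarrow>_{x_i}) (\<partial>\<rightarrow>_{y_i} g) ),
  the sum over i taken coefficientwise (it has finitely many nonzero terms on H~).\<close>
definition sbr :: "'k::field ser \<Rightarrow> 'k ser \<Rightarrow> 'k ser" where
  "sbr f g m = Sum_any (\<lambda>i. smul (dRy i f) (dLx i g) m + smul (dRx i f) (dLy i g) m)"

definition sone :: "'k::field ser" where
  "sone m = (if m = ({}, {}) then 1 else 0)"

definition sscale :: "'k::field \<Rightarrow> 'k ser \<Rightarrow> 'k ser" where
  "sscale c f m = c * f m"

text \<open>Grading automorphism: b_0 + b_1 \<mapsto> b_0 - b_1.\<close>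
definition spar :: "'k::field ser \<Rightarrow> 'k ser" where
  "spar f m = (-1) ^ (card (fst m) + card (snd m)) * f m"

definition V :: "nat \<Rightarrow> 'k::field ser" where
  "V i m = (if \<exists>k. fst m = {i + 3 * n | n. n < k} \<union> {i + 3 * n + 1 | n. n < k}
                 \<and> snd m = {i + 3 * k} then 1 else 0)"

inductive_set Palg :: "'k::field ser set" where
  one: "sone \<in> Palg"
| gen: "i < 3 \<Longrightarrow> V i \<in> Palg"
| add: "f \<in> Palg \<Longrightarrow> g \<in> Palg \<Longrightarrow> f + g \<in> Palg"
| scale: "f \<in> Palg \<Longrightarrow> sscale c f \<in> Palg"
| mult: "f \<in> Palg \<Longrightarrow> g \<in> Palg \<Longrightarrow> smul f g \<in> Palg"
| brack: "f \<in> Palg \<Longrightarrow> g \<in> Palg \<Longrightarrow> sbr f g \<in> Palg"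

text \<open>An element (a, c) stands for a + bar c.\<close>
type_synonym 'k kan = "'k ser \<times> 'k ser"

definition Kan :: "'k::field kan set" where
  "Kan = Palg \<times> Palg"

definition kscale :: "'k::field \<Rightarrow> 'k kan \<Rightarrow> 'k kan" where
  "kscale c u = (sscale c (fst u), sscale c (snd u))"

text \<open>Bilinear extension of a\<bullet>b = ab, bar a\<bullet>b = (-1)^|b| bar(ab), a\<bullet>bar b = bar(ab),
  bar a\<bullet>bar b = (-1)^|b| {a,b}.\<close>
definition kmul :: "'k::field kan \<Rightarrow> 'k kan \<Rightarrow> 'k kan" where
  "kmul u v = (smul (fst u) (fst v) + sbr (snd u) (spar (snd v)),
               smul (snd u) (spar (fst v)) + smul (fst u) (snd v))"

definition kone :: "'k::field kan" where "kone = (sone, 0)"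
definition kV :: "nat \<Rightarrow> 'k::field kan" where "kV i = (V i, 0)"
definition kbar1 :: "'k::field kan" where "kbar1 = (0, sone)"

inductive jmon :: "'k::field kan \<Rightarrow> nat \<times> nat \<times> nat \<times> nat \<Rightarrow> bool" where
  unit: "jmon kone (0, 0, 0, 0)"
| V0: "jmon (kV 0) (1, 0, 0, 0)"
| V1: "jmon (kV 1) (0, 1, 0, 0)"
| V2: "jmon (kV 2) (0, 0, 1, 0)"
| bar1: "jmon kbar1 (0, 0, 0, 1)"
| prod: "jmon u (a1, a2, a3, a4) \<Longrightarrow> jmon v (b1, b2, b3, b4) \<Longrightarrow>
         jmon (kmul u v) (a1 + b1, a2 + b2, a3 + b3, a4 + b4)"

definition Jdeg :: "nat \<times> nat \<times> nat \<times> nat \<Rightarrow> 'k::field kan set" where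
  "Jdeg d = module.span kscale {u. jmon u d}"

end

theory Submission
  imports Defs
begin


lemma sum_single_nz:
  assumes "finite S" "\<And>x. x \<in> S \<Longrightarrow> x \<noteq> a \<Longrightarrow> f x = 0"
  shows "sum f S = (if a \<in> S then f a else 0)"
proof (cases "a \<in> S")
  case True
  then have "sum f S = f a + sum f (S - {a})" using assms(1) by (simp add: sum.remove)
  also have "sum f (S - {a}) = 0" using assms(2) by (intro sum.neutral) auto
  finally show ?thesis using True by simp
next
  case False
  then show ?thesis using assms(2) by (auto intro!: sum.neutral)
qed

lemma smul_prod: "smul f g m = (\<Sum>p\<in>Pow (fst m) \<times> Pow (snd m).
   msign p (fst m - fst p, snd m - snd p) * f p * g (fst m - fst p, snd m - snd p))"
  unfolding smul_def by (simp add: sum.cartesian_product split_def)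

lemma smul_infinite: "\<not> (finite (fst m) \<and> finite (snd m)) \<Longrightarrow> smul f g m = 0"
  unfolding smul_def by auto

lemma smul_one_term:
  assumes "\<And>a1 b1. a1 \<subseteq> fst m \<Longrightarrow> b1 \<subseteq> snd m \<Longrightarrow> f (a1,b1) \<noteq> 0 \<Longrightarrow>
            g (fst m - a1, snd m - b1) \<noteq> 0 \<Longrightarrow> (a1,b1) = p"
  shows "smul f g m = (if finite (fst m) \<and> finite (snd m) \<and> fst p \<subseteq> fst m \<and> snd p \<subseteq> snd m
      then msign p (fst m - fst p, snd m - snd p) * f p * g (fst m - fst p, snd m - snd p) else 0)"
proof (cases "finite (fst m) \<and> finite (snd m)")
  case True
  have z: "msign x (fst m - fst x, snd m - snd x) * f x * g (fst m - fst x, snd m - snd x) = 0"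
    if "x \<in> Pow (fst m) \<times> Pow (snd m)" "x \<noteq> p" for x
  proof -
    obtain a1 b1 where x: "x = (a1,b1)" by force
    show ?thesis using assms[of a1 b1] that unfolding x by auto
  qed
  have "smul f g m = (if p \<in> Pow (fst m) \<times> Pow (snd m) then
     msign p (fst m - fst p, snd m - snd p) * f p * g (fst m - fst p, snd m - snd p) else 0)"
    unfolding smul_prod by (rule sum_single_nz) (use True z in auto)
  then show ?thesis using True by (simp add: mem_Times_iff)
next
  case False
  then show ?thesis using smul_infinite[OF False, of f g] by auto
qed

lemma smul_zero_terms:
  assumes "\<And>a1 b1. a1 \<subseteq> fst m \<Longrightarrow> b1 \<subseteq> snd m \<Longrightarrow> f (a1,b1) \<noteq> 0 \<Longrightarrow>
            g (fst m - a1, snd m - b1) \<noteq> 0 \<Longrightarrow> False"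
  shows "smul f g m = 0"
  unfolding smul_def
proof (intro sum.neutral ballI)
  fix a1 b1 assume "a1 \<in> Pow (fst m)" "b1 \<in> Pow (snd m)"
  then show "msign (a1, b1) (fst m - a1, snd m - b1) * f (a1, b1) * g (fst m - a1, snd m - b1) = 0"
    using assms[of a1 b1] by auto
qed

lemma smul_nz: "smul f g m \<noteq> 0 \<Longrightarrow> finite (fst m) \<and> finite (snd m) \<and>
   (\<exists>a1 b1. a1 \<subseteq> fst m \<and> b1 \<subseteq> snd m \<and> f (a1,b1) \<noteq> 0 \<and> g (fst m - a1, snd m - b1) \<noteq> 0)"
  using smul_infinite smul_zero_terms by metis

lemma sbr_nz: "sbr f g m \<noteq> 0 \<Longrightarrow> \<exists>i. smul (dRy i f) (dLx i g) m \<noteq> 0 \<or> smul (dRx i f) (dLy i g) m \<noteq> 0"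
proof (rule ccontr)
  assume "sbr f g m \<noteq> 0" "\<not> (\<exists>i. smul (dRy i f) (dLx i g) m \<noteq> 0 \<or> smul (dRx i f) (dLy i g) m \<noteq> 0)"
  then show False unfolding sbr_def by simp
qed

lemma dRy_nz: "dRy i f (a,b) \<noteq> 0 \<Longrightarrow> i \<notin> b \<and> f (a, insert i b) \<noteq> 0"
  unfolding dRy_def by (auto split: if_splits)
lemma dRx_nz: "dRx i f (a,b) \<noteq> 0 \<Longrightarrow> i \<notin> a \<and> f (insert i a, b) \<noteq> 0"
  unfolding dRx_def by (auto split: if_splits)
lemma dLx_nz: "dLx i f (a,b) \<noteq> 0 \<Longrightarrow> i \<notin> a \<and> f (insert i a, b) \<noteq> 0"
  unfolding dLx_def by (auto split: if_splits)
lemma dLy_nz: "dLy i f (a,b) \<noteq> 0 \<Longrightarrow> i \<notin> b \<and> f (a, insert i b) \<noteq> 0"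
  unfolding dLy_def by (auto split: if_splits)

lemma HtildeD: "f \<in> Htilde \<Longrightarrow> f m \<noteq> 0 \<Longrightarrow> admissible m"
  unfolding Htilde_def by blast

lemma adm_union:
  assumes "admissible (a1,b1)" "admissible (a2,b2)"
  shows "admissible (a1 \<union> a2, b1 \<union> b2)"
proof -
  have f: "finite a1" "finite a2" "finite b1" "finite b2" using assms unfolding admissible_def by auto
  show ?thesis
  proof (cases "b1 = {} \<and> b2 = {}")
    case True then show ?thesis using assms unfolding admissible_def by auto
  next
    case False
    have "\<forall>a\<in>a1. a < Max (b1 \<union> b2)"
    proof (cases "b1 = {}")
      case True then show ?thesis using assms unfolding admissible_def by auto
    next
      case False
      then have "Max b1 \<le> Max (b1 \<union> b2)" using f by (intro Max_mono) auto
      then show ?thesis using assms False unfolding admissible_def by fastforce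
    qed
    moreover have "\<forall>a\<in>a2. a < Max (b1 \<union> b2)"
    proof (cases "b2 = {}")
      case True then show ?thesis using assms unfolding admissible_def by auto
    next
      case False
      then have "Max b2 \<le> Max (b1 \<union> b2)" using f by (intro Max_mono) auto
      then show ?thesis using assms False unfolding admissible_def by fastforce
    qed
    ultimately show ?thesis using f False unfolding admissible_def by auto
  qed
qed

lemma adm_split:
  assumes "admissible (a1,b1)" "admissible (fst m - a1, snd m - b1)" "a1 \<subseteq> fst m" "b1 \<subseteq> snd m"
  shows "admissible m"
proof -
  have "m = (a1 \<union> (fst m - a1), b1 \<union> (snd m - b1))" using assms(3,4)
    by (simp add: Un_Diff_cancel Un_absorb1)
  then show ?thesis using adm_union[OF assms(1,2)] by simp
qed

lemma Htilde_smul: assumes "f \<in> Htilde" "g \<in> Htilde" shows "smul f g \<in> Htilde"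
  unfolding Htilde_def
proof (intro CollectI allI impI)
  fix m assume "smul f g m \<noteq> 0"
  from smul_nz[OF this] obtain a1 b1 where "a1 \<subseteq> fst m" "b1 \<subseteq> snd m" "f (a1,b1) \<noteq> 0"
    "g (fst m - a1, snd m - b1) \<noteq> 0" by blast
  then show "admissible m" using adm_split[of a1 b1 m] HtildeD[OF assms(1)] HtildeD[OF assms(2)] by blast
qed

lemma Htilde_add: assumes "f \<in> Htilde" "g \<in> Htilde" shows "f + g \<in> Htilde"
  unfolding Htilde_def
proof (intro CollectI allI impI)
  fix m assume "(f + g) m \<noteq> 0"
  then have "f m \<noteq> 0 \<or> g m \<noteq> 0" by auto
  then show "admissible m" using HtildeD assms by blast
qed

lemma Htilde_scale: "f \<in> Htilde \<Longrightarrow> sscale c f \<in> Htilde"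
  unfolding Htilde_def sscale_def by auto

lemma Htilde_zero: "0 \<in> Htilde"
  unfolding Htilde_def by auto

lemma Htilde_sone: "sone \<in> Htilde"
  unfolding Htilde_def sone_def admissible_def by auto

definition Aset :: "nat \<Rightarrow> nat \<Rightarrow> nat set" where
  "Aset j k = {j + 3 * n | n. n < k} \<union> {j + 3 * n + 1 | n. n < k}"

lemma mem_Aset: "x \<in> Aset j k \<longleftrightarrow> (\<exists>n<k. x = j + 3 * n \<or> x = j + 3 * n + 1)"
  unfolding Aset_def by auto

lemma finite_Aset[simp]: "finite (Aset j k)"
proof -
  have "Aset j k \<subseteq> {..j + 3 * k}" unfolding mem_Aset by (auto simp: mem_Aset)
  then show ?thesis using finite_subset by blast
qed

lemma V_eq: "V j m = (if \<exists>k. m = (Aset j k, {j + 3 * k}) then 1 else 0)"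
  unfolding V_def Aset_def by (cases m) auto

lemma V_nz: "V j m \<noteq> 0 \<longleftrightarrow> (\<exists>k. m = (Aset j k, {j + 3 * k}))"
  unfolding V_eq by auto

lemma Htilde_V: "V j \<in> Htilde"
  unfolding Htilde_def
proof (intro CollectI allI impI)
  fix m :: mon assume "V j m \<noteq> 0"
  then obtain k where m: "m = (Aset j k, {j + 3 * k})" using V_nz by blast
  show "admissible m" unfolding m admissible_def by (auto simp: mem_Aset)
qed

lemma adm_Max_le: "admissible (a, b) \<Longrightarrow> b \<subseteq> B \<Longrightarrow> finite B \<Longrightarrow> b \<noteq> {} \<Longrightarrow> x \<in> a \<Longrightarrow> x < Max B"
proof -
  assume as: "admissible (a, b)" "b \<subseteq> B" "finite B" "b \<noteq> {}" "x \<in> a"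
  then have "x < Max b" unfolding admissible_def by auto
  also have "Max b \<le> Max B" using as by (intro Max_mono) auto
  finally show ?thesis .
qed

lemma sbr_term1_nz:
  assumes "f \<in> Htilde" "g \<in> Htilde" "smul (dRy i f) (dLx i g) m \<noteq> 0"
  shows "admissible m \<and> snd m \<noteq> {} \<and> i < Max (snd m)"
proof -
  from smul_nz[OF assms(3)] obtain a1 b1 where ab: "finite (fst m)" "finite (snd m)" "a1 \<subseteq> fst m" "b1 \<subseteq> snd m"
    "dRy i f (a1,b1) \<noteq> 0" "dLx i g (fst m - a1, snd m - b1) \<noteq> 0" by blast
  define a2 where "a2 = fst m - a1"
  define b2 where "b2 = snd m - b1"
  have F: "i \<notin> b1" "admissible (a1, insert i b1)" using dRy_nz[OF ab(5)] HtildeD[OF assms(1)] by auto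
  have G: "i \<notin> a2" "admissible (insert i a2, b2)" using dLx_nz[OF ab(6)] HtildeD[OF assms(2)] 
    unfolding a2_def b2_def by auto
  have b2ne: "b2 \<noteq> {}" using G(2) unfolding admissible_def by auto
  have b2s: "b2 \<subseteq> snd m" unfolding b2_def by auto
  have iM: "i < Max (snd m)" using adm_Max_le[OF G(2) b2s ab(2) b2ne] by simp
  have sne: "snd m \<noteq> {}" using b2ne b2s by auto
  have "\<forall>x\<in>fst m. x < Max (snd m)"
  proof
    fix x assume x: "x \<in> fst m"
    show "x < Max (snd m)"
    proof (cases "x \<in> a1")
      case True
      have "insert i b1 \<subseteq> insert i (snd m)" using ab by auto
      have "x < Max (insert i b1)" using F(2) True unfolding admissible_def by auto
      also have "Max (insert i b1) \<le> max i (Max (snd m))"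
      proof (cases "b1 = {}")
        case False
        then have "Max b1 \<le> Max (snd m)" using ab by (intro Max_mono) auto
        moreover have "Max (insert i b1) = max i (Max b1)" using False finite_subset[OF ab(4) ab(2)] by simp
        ultimately show ?thesis by (auto simp: max_def)
      qed simp
      finally show ?thesis using iM by simp
    next
      case False
      then have "x \<in> insert i a2" using x unfolding a2_def by auto
      then show ?thesis using adm_Max_le[OF G(2) b2s ab(2) b2ne] by blast
    qed
  qed
  then show ?thesis using ab sne iM unfolding admissible_def by auto
qed

lemma sbr_term2_nz:
  assumes "f \<in> Htilde" "g \<in> Htilde" "smul (dRx i f) (dLy i g) m \<noteq> 0"
  shows "admissible m \<and> snd m \<noteq> {} \<and> i < Max (snd m)"
proof -
  from smul_nz[OF assms(3)] obtain a1 b1 where ab: "finite (fst m)" "finite (snd m)" "a1 \<subseteq> fst m" "b1 \<subseteq> snd m"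
    "dRx i f (a1,b1) \<noteq> 0" "dLy i g (fst m - a1, snd m - b1) \<noteq> 0" by blast
  define a2 where "a2 = fst m - a1"
  define b2 where "b2 = snd m - b1"
  have F: "i \<notin> a1" "admissible (insert i a1, b1)" using dRx_nz[OF ab(5)] HtildeD[OF assms(1)] by auto
  have G: "i \<notin> b2" "admissible (a2, insert i b2)" using dLy_nz[OF ab(6)] HtildeD[OF assms(2)] 
    unfolding a2_def b2_def by auto
  have b1ne: "b1 \<noteq> {}" using F(2) unfolding admissible_def by auto
  have iM: "i < Max (snd m)" using adm_Max_le[OF F(2) ab(4) ab(2) b1ne] by simp
  have sne: "snd m \<noteq> {}" using b1ne ab by auto
  have "\<forall>x\<in>fst m. x < Max (snd m)"
  proof
    fix x assume x: "x \<in> fst m"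
    show "x < Max (snd m)"
    proof (cases "x \<in> a1")
      case True
      then show ?thesis using adm_Max_le[OF F(2) ab(4) ab(2) b1ne] by blast
    next
      case False
      then have xa2: "x \<in> a2" using x unfolding a2_def by auto
      have "x < Max (insert i b2)" using G(2) xa2 unfolding admissible_def by auto
      also have "Max (insert i b2) \<le> max i (Max (snd m))"
      proof (cases "b2 = {}")
        case False
        then have "Max b2 \<le> Max (snd m)" using ab unfolding b2_def by (intro Max_mono) auto
        moreover have "Max (insert i b2) = max i (Max b2)" using False ab unfolding b2_def by simp
        ultimately show ?thesis by (auto simp: max_def)
      qed simp
      finally show ?thesis using iM by simp
    qed
  qed
  then show ?thesis using ab sne iM unfolding admissible_def by auto
qed

lemma Htilde_sbr: assumes "f \<in> Htilde" "g \<in> Htilde" shows "sbr f g \<in> Htilde"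
  unfolding Htilde_def
proof (intro CollectI allI impI)
  fix m assume "sbr f g m \<noteq> 0"
  from sbr_nz[OF this] show "admissible m" using sbr_term1_nz sbr_term2_nz assms by blast
qed

lemma sbr_fin_support:
  assumes "f \<in> Htilde" "g \<in> Htilde"
  shows "finite {i. smul (dRy i f) (dLx i g) m + smul (dRx i f) (dLy i g) m \<noteq> 0}"
proof -
  have "{i. smul (dRy i f) (dLx i g) m + smul (dRx i f) (dLy i g) m \<noteq> 0} \<subseteq> {..<Max (snd m)}"
  proof
    fix i assume "i \<in> {i. smul (dRy i f) (dLx i g) m + smul (dRx i f) (dLy i g) m \<noteq> 0}"
    then have "smul (dRy i f) (dLx i g) m \<noteq> 0 \<or> smul (dRx i f) (dLy i g) m \<noteq> 0" by auto
    then show "i \<in> {..<Max (snd m)}" using sbr_term1_nz[OF assms] sbr_term2_nz[OF assms] by blast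
  qed
  then show ?thesis using finite_subset by blast
qed

lemma Palg_Htilde: "f \<in> Palg \<Longrightarrow> f \<in> Htilde"
  by (induction rule: Palg.induct)
     (blast intro: Htilde_sone Htilde_V Htilde_add Htilde_scale Htilde_smul Htilde_sbr)+



lemma smul_add_left: "smul (f + g) h = smul f h + smul g h"
  by (rule ext) (simp add: smul_def sum.distrib[symmetric] algebra_simps)
lemma smul_add_right: "smul h (f + g) = smul h f + smul h g"
  by (rule ext) (simp add: smul_def sum.distrib[symmetric] algebra_simps)
lemma smul_scale_left: "smul (sscale c f) g = sscale c (smul f g)"
  by (rule ext) (simp add: smul_def sscale_def sum_distrib_left algebra_simps)
lemma smul_scale_right: "smul f (sscale c g) = sscale c (smul f g)"
  by (rule ext) (simp add: smul_def sscale_def sum_distrib_left algebra_simps)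
lemma smul_zero_left[simp]: "smul 0 g = 0"
  by (rule ext) (simp add: smul_def)
lemma smul_zero_right[simp]: "smul f 0 = 0"
  by (rule ext) (simp add: smul_def)

lemma dRy_add: "dRy i (f + g) = dRy i f + dRy i g" by (rule ext) (simp add: dRy_def algebra_simps)
lemma dRx_add: "dRx i (f + g) = dRx i f + dRx i g" by (rule ext) (simp add: dRx_def algebra_simps)
lemma dLy_add: "dLy i (f + g) = dLy i f + dLy i g" by (rule ext) (simp add: dLy_def algebra_simps)
lemma dLx_add: "dLx i (f + g) = dLx i f + dLx i g" by (rule ext) (simp add: dLx_def algebra_simps)
lemma dRy_scale: "dRy i (sscale c f) = sscale c (dRy i f)" by (rule ext) (simp add: dRy_def sscale_def algebra_simps)
lemma dRx_scale: "dRx i (sscale c f) = sscale c (dRx i f)" by (rule ext) (simp add: dRx_def sscale_def algebra_simps)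
lemma dLy_scale: "dLy i (sscale c f) = sscale c (dLy i f)" by (rule ext) (simp add: dLy_def sscale_def algebra_simps)
lemma dLx_scale: "dLx i (sscale c f) = sscale c (dLx i f)" by (rule ext) (simp add: dLx_def sscale_def algebra_simps)
lemma dRy_zero[simp]: "dRy i 0 = 0" by (rule ext) (simp add: dRy_def)
lemma dRx_zero[simp]: "dRx i 0 = 0" by (rule ext) (simp add: dRx_def)
lemma dLy_zero[simp]: "dLy i 0 = 0" by (rule ext) (simp add: dLy_def)
lemma dLx_zero[simp]: "dLx i 0 = 0" by (rule ext) (simp add: dLx_def)

lemma sbr_zero_left[simp]: "sbr 0 g = 0" by (rule ext) (simp add: sbr_def)
lemma sbr_zero_right[simp]: "sbr f 0 = 0" by (rule ext) (simp add: sbr_def)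

abbreviation sterm :: "'k::field ser \<Rightarrow> 'k ser \<Rightarrow> mon \<Rightarrow> nat \<Rightarrow> 'k" where
  "sterm f g m i \<equiv> smul (dRy i f) (dLx i g) m + smul (dRx i f) (dLy i g) m"

lemma sbr_add_left:
  assumes "f \<in> Htilde" "g \<in> Htilde" "h \<in> Htilde"
  shows "sbr (f + g) h = sbr f h + sbr g h"
proof (rule ext)
  fix m
  have "sbr (f + g) h m = Sum_any (\<lambda>i. sterm f h m i + sterm g h m i)"
    unfolding sbr_def by (simp add: dRy_add dRx_add smul_add_left algebra_simps)
  also have "\<dots> = Sum_any (sterm f h m) + Sum_any (sterm g h m)"
    by (rule Sum_any.distrib) (simp_all add: sbr_fin_support assms)
  finally show "sbr (f + g) h m = (sbr f h + sbr g h) m" by (simp add: sbr_def)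
qed

lemma sbr_add_right:
  assumes "f \<in> Htilde" "g \<in> Htilde" "h \<in> Htilde"
  shows "sbr h (f + g) = sbr h f + sbr h g"
proof (rule ext)
  fix m
  have "sbr h (f + g) m = Sum_any (\<lambda>i. sterm h f m i + sterm h g m i)"
    unfolding sbr_def by (simp add: dLy_add dLx_add smul_add_right algebra_simps)
  also have "\<dots> = Sum_any (sterm h f m) + Sum_any (sterm h g m)"
    by (rule Sum_any.distrib) (simp_all add: sbr_fin_support assms)
  finally show "sbr h (f + g) m = (sbr h f + sbr h g) m" by (simp add: sbr_def)
qed

lemma sbr_scale_left:
  assumes "f \<in> Htilde" "g \<in> Htilde"
  shows "sbr (sscale c f) g = sscale c (sbr f g)"
proof (rule ext)
  fix m
  have "sbr (sscale c f) g m = Sum_any (\<lambda>i. c * sterm f g m i)"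
    unfolding sbr_def by (simp add: dRy_scale dRx_scale smul_scale_left sscale_def algebra_simps)
  also have "\<dots> = c * Sum_any (sterm f g m)"
    by (rule Sum_any_right_distrib[symmetric]) (simp_all add: sbr_fin_support assms)
  finally show "sbr (sscale c f) g m = sscale c (sbr f g) m" by (simp add: sbr_def sscale_def)
qed

lemma sbr_scale_right:
  assumes "f \<in> Htilde" "g \<in> Htilde"
  shows "sbr f (sscale c g) = sscale c (sbr f g)"
proof (rule ext)
  fix m
  have "sbr f (sscale c g) m = Sum_any (\<lambda>i. c * sterm f g m i)"
    unfolding sbr_def by (simp add: dLy_scale dLx_scale smul_scale_right sscale_def algebra_simps)
  also have "\<dots> = c * Sum_any (sterm f g m)"
    by (rule Sum_any_right_distrib[symmetric]) (simp_all add: sbr_fin_support assms)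
  finally show "sbr f (sscale c g) m = sscale c (sbr f g) m" by (simp add: sbr_def sscale_def)
qed

lemma spar_add: "spar (f + g) = spar f + spar g" by (rule ext) (simp add: spar_def algebra_simps)
lemma spar_scale: "spar (sscale c f) = sscale c (spar f)" by (rule ext) (simp add: spar_def sscale_def algebra_simps)
lemma spar_zero[simp]: "spar 0 = 0" by (rule ext) (simp add: spar_def)
lemma spar_sone[simp]: "spar sone = sone" by (rule ext) (simp add: spar_def sone_def)
lemma spar_spar[simp]: "spar (spar f) = f"
  by (rule ext) (simp add: spar_def power_add[symmetric] power_mult_distrib[symmetric] mult.assoc[symmetric])

lemma neg1_pow_card_split:
  assumes "finite A" "a \<subseteq> A" "finite B" "b \<subseteq> B"
  shows "((-1::'k::field) ^ (card A + card B)) = (-1) ^ (card a + card b) * (-1) ^ (card (A - a) + card (B - b))"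
proof -
  have "card A = card a + card (A - a)" using assms by (metis card_Diff_subset card_mono le_add_diff_inverse finite_subset)
  moreover have "card B = card b + card (B - b)" using assms by (metis card_Diff_subset card_mono le_add_diff_inverse finite_subset)
  ultimately show ?thesis by (simp add: power_add[symmetric] algebra_simps)
qed

lemma spar_smul: "spar (smul f g) = smul (spar f) (spar g)"
proof (rule ext)
  fix m :: mon
  show "spar (smul f g) m = smul (spar f) (spar g) m"
  proof (cases "finite (fst m) \<and> finite (snd m)")
    case True
    show ?thesis
      unfolding spar_def smul_def sum_distrib_left
    proof (intro sum.cong refl)
      fix a1 b1 assume "a1 \<in> Pow (fst m)" "b1 \<in> Pow (snd m)"
      then show "(-1) ^ (card (fst m) + card (snd m)) *
        (msign (a1, b1) (fst m - a1, snd m - b1) * f (a1, b1) * g (fst m - a1, snd m - b1)) =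
        msign (a1, b1) (fst m - a1, snd m - b1) * ((-1) ^ (card (fst (a1, b1)) + card (snd (a1, b1))) * f (a1, b1)) *
        ((-1) ^ (card (fst (fst m - a1, snd m - b1)) + card (snd (fst m - a1, snd m - b1))) * g (fst m - a1, snd m - b1))"
        by (subst neg1_pow_card_split[of "fst m" a1 "snd m" b1]) (use True in \<open>auto simp: algebra_simps\<close>)
    qed
  next
    case False
    then show ?thesis by (simp add: smul_infinite spar_def)
  qed
qed

lemma Htilde_fin: "f \<in> Htilde \<Longrightarrow> f m \<noteq> 0 \<Longrightarrow> finite (fst m) \<and> finite (snd m)"
  using HtildeD unfolding admissible_def by blast

lemma dRy_spar: "f \<in> Htilde \<Longrightarrow> dRy i (spar f) = sscale (-1) (spar (dRy i f))"
proof (rule ext)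
  fix m :: mon assume f: "f \<in> Htilde"
  obtain a b where m: "m = (a, b)" by force
  show "dRy i (spar f) m = sscale (-1) (spar (dRy i f)) m"
  proof (cases "i \<notin> b \<and> f (a, insert i b) \<noteq> 0")
    case True
    then have "finite b" using Htilde_fin[OF f True[THEN conjunct2]] by simp
    then show ?thesis using True unfolding m dRy_def spar_def sscale_def by (simp add: algebra_simps)
  next
    case False
    then show ?thesis unfolding m dRy_def spar_def sscale_def by auto
  qed
qed

lemma dRx_spar: "f \<in> Htilde \<Longrightarrow> dRx i (spar f) = sscale (-1) (spar (dRx i f))"
proof (rule ext)
  fix m :: mon assume f: "f \<in> Htilde"
  obtain a b where m: "m = (a, b)" by force
  show "dRx i (spar f) m = sscale (-1) (spar (dRx i f)) m"
  proof (cases "i \<notin> a \<and> f (insert i a, b) \<noteq> 0")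
    case True
    then have "finite a" using Htilde_fin[OF f True[THEN conjunct2]] by simp
    then show ?thesis using True unfolding m dRx_def spar_def sscale_def by (simp add: algebra_simps)
  next
    case False
    then show ?thesis unfolding m dRx_def spar_def sscale_def by auto
  qed
qed

lemma dLx_spar: "f \<in> Htilde \<Longrightarrow> dLx i (spar f) = sscale (-1) (spar (dLx i f))"
proof (rule ext)
  fix m :: mon assume f: "f \<in> Htilde"
  obtain a b where m: "m = (a, b)" by force
  show "dLx i (spar f) m = sscale (-1) (spar (dLx i f)) m"
  proof (cases "i \<notin> a \<and> f (insert i a, b) \<noteq> 0")
    case True
    then have "finite a" using Htilde_fin[OF f True[THEN conjunct2]] by simp
    then show ?thesis using True unfolding m dLx_def spar_def sscale_def by (simp add: algebra_simps)
  next
    case False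
    then show ?thesis unfolding m dLx_def spar_def sscale_def by auto
  qed
qed

lemma dLy_spar: "f \<in> Htilde \<Longrightarrow> dLy i (spar f) = sscale (-1) (spar (dLy i f))"
proof (rule ext)
  fix m :: mon assume f: "f \<in> Htilde"
  obtain a b where m: "m = (a, b)" by force
  show "dLy i (spar f) m = sscale (-1) (spar (dLy i f)) m"
  proof (cases "i \<notin> b \<and> f (a, insert i b) \<noteq> 0")
    case True
    then have "finite b" using Htilde_fin[OF f True[THEN conjunct2]] by simp
    then show ?thesis using True unfolding m dLy_def spar_def sscale_def by (simp add: algebra_simps)
  next
    case False
    then show ?thesis unfolding m dLy_def spar_def sscale_def by auto
  qed
qed

lemma sscale_sscale: "sscale a (sscale b f) = sscale (a * b) f"
  by (rule ext) (simp add: sscale_def)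

lemma sscale_one[simp]: "sscale 1 f = f"
  by (rule ext) (simp add: sscale_def)

lemma smul_neg_neg: "smul (sscale (-1) F) (sscale (-1) G) = smul F G"
  by (simp add: smul_scale_left smul_scale_right sscale_sscale)

lemma Htilde_spar: "f \<in> Htilde \<Longrightarrow> spar f \<in> Htilde"
  unfolding Htilde_def spar_def by auto

lemma spar_sbr:
  assumes f: "f \<in> Htilde" and g: "g \<in> Htilde"
  shows "spar (sbr f g) = sbr (spar f) (spar g)"
proof (rule ext)
  fix m
  have t: "sterm (spar f) (spar g) m i = (-1) ^ (card (fst m) + card (snd m)) * sterm f g m i" for i
    using f g by (simp add: dRy_spar dRx_spar dLx_spar dLy_spar smul_neg_neg spar_smul[symmetric] spar_def algebra_simps)
  have "sbr (spar f) (spar g) m = Sum_any (\<lambda>i. (-1) ^ (card (fst m) + card (snd m)) * sterm f g m i)"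
    unfolding sbr_def t by simp
  also have "\<dots> = (-1) ^ (card (fst m) + card (snd m)) * Sum_any (sterm f g m)"
    by (rule Sum_any_right_distrib[symmetric]) (simp_all add: sbr_fin_support f g)
  finally show "spar (sbr f g) m = sbr (spar f) (spar g) m" by (simp add: sbr_def spar_def)
qed

lemma card_Aset: "card (Aset j k) = 2 * k"
proof (induction k)
  case 0 then show ?case by (simp add: Aset_def)
next
  case (Suc k)
  have "Aset j (Suc k) = insert (j + 3 * k) (insert (j + 3 * k + 1) (Aset j k))"
    by (auto simp: mem_Aset less_Suc_eq)
  moreover have "j + 3 * k \<notin> Aset j k" "j + 3 * k + 1 \<notin> Aset j k" by (auto simp: mem_Aset)
  ultimately show ?case using Suc by simp
qed

lemma spar_V: "spar (V j) = sscale (-1) (V j)"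
  by (rule ext) (auto simp: spar_def sscale_def V_eq card_Aset)

lemma Palg_spar: "f \<in> Palg \<Longrightarrow> spar f \<in> Palg"
proof (induction rule: Palg.induct)
  case one then show ?case by (simp add: Palg.one)
next
  case (gen i) then show ?case by (simp add: spar_V Palg.gen Palg.scale)
next
  case (add f g) then show ?case by (simp only: spar_add) (rule Palg.add)
next
  case (scale f c) then show ?case by (simp add: spar_scale Palg.scale)
next
  case (mult f g) then show ?case by (simp add: spar_smul Palg.mult)
next
  case (brack f g) then show ?case by (simp add: spar_sbr Palg_Htilde Palg.brack)
qed



lemma vs_kscale: "vector_space (kscale :: 'k::field \<Rightarrow> 'k kan \<Rightarrow> 'k kan)"
  by unfold_locales (auto simp: kscale_def sscale_def fun_eq_iff algebra_simps)

interpretation K: vector_space "kscale :: 'k::field \<Rightarrow> 'k kan \<Rightarrow> 'k kan"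
  by (rule vs_kscale)

lemma sum_fun_app: "(sum f A) x = sum (\<lambda>a. f a x) A"
  by (induction A rule: infinite_finite_induct) auto

lemma zero_Palg: "(0 :: 'k::field ser) \<in> Palg"
proof -
  have "sscale 0 (sone :: 'k ser) \<in> Palg" by (intro Palg.scale Palg.one)
  moreover have "sscale 0 sone = (0 :: 'k::field ser)" by (rule ext) (simp add: sscale_def)
  ultimately show ?thesis by simp
qed

lemma Kan_sub: "K.subspace (Kan :: 'k::field kan set)"
  unfolding K.subspace_def Kan_def
  by (auto simp: kscale_def zero_Palg zero_prod_def intro: Palg.add Palg.scale)

lemma kmul_Kan: "u \<in> Kan \<Longrightarrow> v \<in> Kan \<Longrightarrow> kmul u v \<in> Kan"
  unfolding Kan_def kmul_def by (auto intro!: Palg.add Palg.mult Palg.brack Palg_spar)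

lemma jmon_Kan: "jmon u d \<Longrightarrow> u \<in> Kan"
proof (induction rule: jmon.induct)
  case unit then show ?case by (simp add: Kan_def kone_def Palg.one zero_Palg)
next
  case V0 then show ?case by (simp add: Kan_def kV_def Palg.gen zero_Palg)
next
  case V1 then show ?case by (simp add: Kan_def kV_def Palg.gen zero_Palg)
next
  case V2 then show ?case by (simp add: Kan_def kV_def Palg.gen zero_Palg)
next
  case bar1 then show ?case by (simp add: Kan_def kbar1_def Palg.one zero_Palg)
next
  case (prod u a1 a2 a3 a4 v b1 b2 b3 b4) then show ?case by (simp add: kmul_Kan)
qed

definition Jset :: "'k::field kan set" where "Jset = {u. \<exists>d. jmon u d}"

lemma span_Jdeg: "K.span (\<Union>d. Jdeg d) = K.span (Jset :: 'k::field kan set)"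
proof -
  have "Jdeg d \<subseteq> K.span (Jset :: 'k kan set)" for d
    unfolding Jdeg_def Jset_def by (rule K.span_mono) blast
  then have "(\<Union>d. Jdeg d) \<subseteq> K.span (Jset :: 'k kan set)" by blast
  moreover have "(Jset :: 'k kan set) \<subseteq> K.span (\<Union>d. Jdeg d)"
  proof
    fix u :: "'k kan" assume "u \<in> Jset"
    then obtain d where "jmon u d" unfolding Jset_def by auto
    then have "u \<in> Jdeg d" unfolding Jdeg_def by (auto intro: K.span_base)
    then show "u \<in> K.span (\<Union>d. Jdeg d)" by (auto intro: K.span_base)
  qed
  ultimately show ?thesis by (intro K.span_eq[THEN iffD2] conjI)
qed

lemma span_Jset_Kan: "K.span Jset \<subseteq> (Kan :: 'k::field kan set)"
  by (rule K.span_minimal) (auto simp: Jset_def jmon_Kan Kan_sub)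

lemma Kan_Htilde: "u \<in> Kan \<Longrightarrow> fst u \<in> Htilde \<and> snd u \<in> Htilde"
  unfolding Kan_def by (auto simp: Palg_Htilde)

lemma kmul_add_left:
  assumes "u \<in> Kan" "u' \<in> Kan" "v \<in> Kan"
  shows "kmul (u + u') v = kmul u v + kmul u' v"
  using Kan_Htilde[OF assms(1)] Kan_Htilde[OF assms(2)] Kan_Htilde[OF assms(3)]
  by (simp add: kmul_def smul_add_left sbr_add_left Htilde_spar)

lemma kmul_add_right:
  assumes "u \<in> Kan" "v \<in> Kan" "v' \<in> Kan"
  shows "kmul u (v + v') = kmul u v + kmul u v'"
  using Kan_Htilde[OF assms(1)] Kan_Htilde[OF assms(2)] Kan_Htilde[OF assms(3)]
  by (simp add: kmul_def smul_add_right sbr_add_right Htilde_spar spar_add)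

lemma kmul_scale_left:
  assumes "u \<in> Kan" "v \<in> Kan"
  shows "kmul (kscale c u) v = kscale c (kmul u v)"
  using Kan_Htilde[OF assms(1)] Kan_Htilde[OF assms(2)]
  by (simp add: kmul_def kscale_def smul_scale_left sbr_scale_left Htilde_spar)
     (simp add: sscale_def fun_eq_iff algebra_simps)

lemma kmul_scale_right:
  assumes "u \<in> Kan" "v \<in> Kan"
  shows "kmul u (kscale c v) = kscale c (kmul u v)"
  using Kan_Htilde[OF assms(1)] Kan_Htilde[OF assms(2)]
  by (simp add: kmul_def kscale_def smul_scale_right sbr_scale_right Htilde_spar spar_scale)
     (simp add: sscale_def fun_eq_iff algebra_simps)

lemma kmul_zero_left[simp]: "kmul 0 v = 0"
  by (simp add: kmul_def zero_prod_def)
lemma kmul_zero_right[simp]: "kmul u 0 = 0"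
  by (simp add: kmul_def zero_prod_def)

lemma Jset_mul: "u \<in> Jset \<Longrightarrow> v \<in> Jset \<Longrightarrow> kmul u v \<in> Jset"
  unfolding Jset_def
proof safe
  fix d d' assume "jmon u d" "jmon v d'"
  moreover obtain a1 a2 a3 a4 where "d = (a1, a2, a3, a4)" by (cases d) auto
  moreover obtain b1 b2 b3 b4 where "d' = (b1, b2, b3, b4)" by (cases d') auto
  ultimately show "\<exists>d. jmon (kmul u v) d" using jmon.prod by blast
qed

lemma span_mul_gen:
  assumes "u \<in> K.span Jset" "v \<in> Jset"
  shows "kmul u v \<in> K.span Jset"
proof -
  have "u \<in> K.span Jset \<and> kmul u v \<in> K.span Jset"
    using assms(1)
  proof (induction rule: K.span_induct_alt)
    case base then show ?case by (simp add: K.span_zero)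
  next
    case (step c x y)
    have xK0: "x \<in> Kan" using step(1) span_Jset_Kan K.span_base by blast
    have xK: "x \<in> Kan" "kscale c x \<in> Kan" using xK0 Kan_sub by (auto simp: K.subspace_def)
    have yK: "y \<in> Kan" using step(2) span_Jset_Kan by auto
    have vK: "v \<in> Kan" using assms(2) span_Jset_Kan K.span_base by blast
    have "kmul (kscale c x + y) v = kscale c (kmul x v) + kmul y v"
      using xK yK vK by (simp add: kmul_add_left kmul_scale_left)
    moreover have "kmul x v \<in> K.span Jset" using Jset_mul[OF step(1) assms(2)] K.span_base by blast
    moreover have "kscale c x + y \<in> K.span Jset"
      by (rule K.span_add[OF K.span_scale[OF K.span_base[OF step(1)]]]) (use step(2) in blast)
    ultimately show ?case using step(2) by (auto intro!: K.span_add K.span_scale)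
  qed
  then show ?thesis by simp
qed

lemma span_mul:
  assumes "u \<in> K.span Jset" "v \<in> K.span Jset"
  shows "kmul u v \<in> K.span Jset"
proof -
  have uK: "u \<in> Kan" using assms(1) span_Jset_Kan by auto
  have "v \<in> K.span Jset \<and> kmul u v \<in> K.span Jset"
    using assms(2)
  proof (induction rule: K.span_induct_alt)
    case base then show ?case by (simp add: K.span_zero)
  next
    case (step c x y)
    have xK: "x \<in> Kan" using step(1) span_Jset_Kan K.span_base by blast
    have yK: "y \<in> Kan" using step(2) span_Jset_Kan by auto
    have cxK: "kscale c x \<in> Kan" using xK Kan_sub by (auto simp: K.subspace_def)
    have "kmul u (kscale c x + y) = kscale c (kmul u x) + kmul u y"
      using xK yK uK cxK by (simp add: kmul_add_right kmul_scale_right)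
    moreover have "kmul u x \<in> K.span Jset" using span_mul_gen[OF assms(1) step(1)] .
    moreover have "kscale c x + y \<in> K.span Jset"
      by (rule K.span_add[OF K.span_scale[OF K.span_base[OF step(1)]]]) (use step(2) in blast)
    ultimately show ?case using step(2) by (auto intro!: K.span_add K.span_scale)
  qed
  then show ?thesis by simp
qed

lemma smul_sone_right: "f \<in> Htilde \<Longrightarrow> smul f sone = f"
proof (rule ext)
  fix m assume f: "f \<in> Htilde"
  have "smul f sone m = (if finite (fst m) \<and> finite (snd m) then f m else 0)"
    by (subst smul_one_term[where p = m]) (auto simp: sone_def msign_def inv_def split: if_splits)
  then show "smul f sone m = f m" using Htilde_fin[OF f, of m] by auto
qed

lemma smul_sone_left: "f \<in> Htilde \<Longrightarrow> smul sone f = f"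
proof (rule ext)
  fix m assume f: "f \<in> Htilde"
  have "smul sone f m = (if finite (fst m) \<and> finite (snd m) then f m else 0)"
    by (subst smul_one_term[where p = "({},{})"]) (auto simp: sone_def msign_def inv_def split: if_splits)
  then show "smul sone f m = f m" using Htilde_fin[OF f, of m] by auto
qed

lemma bar_eq: "f \<in> Htilde \<Longrightarrow> (0, f) = kmul (f, 0) kbar1"
  by (simp add: kmul_def kbar1_def smul_sone_right)

lemma Kan_span: "(Kan :: 'k::field kan set) \<subseteq> K.span Jset"
proof -
  have "kbar1 \<in> Jset" unfolding Jset_def using jmon.bar1 by blast
  then have kb: "kbar1 \<in> K.span Jset" by (rule K.span_base)
  have main: "(f, 0) \<in> K.span Jset \<and> (0, f) \<in> K.span Jset \<and> (spar f, 0) \<in> K.span Jset \<and> (0, spar f) \<in> K.span Jset"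
    if "f \<in> Palg" for f :: "'k ser"
    using that
  proof (induction rule: Palg.induct)
    case one
    have "kone \<in> Jset" unfolding Jset_def using jmon.unit by blast
    then have "kone \<in> K.span Jset" by (rule K.span_base)
    then show ?case using kb unfolding kone_def kbar1_def spar_sone by (intro conjI)
  next
    case (gen i)
    have "i = 0 \<or> i = 1 \<or> i = 2" using gen by auto
    then have "kV i \<in> Jset" unfolding Jset_def using jmon.V0 jmon.V1 jmon.V2 by blast
    then have g: "kV i \<in> K.span Jset" by (rule K.span_base)
    then have g1: "(V i, 0) \<in> K.span Jset" by (simp add: kV_def)
    have g2: "(0, V i) \<in> K.span Jset" by (subst bar_eq[OF Htilde_V]) (rule span_mul[OF g1 kb])
    have e1: "(sscale (-1) (V i), 0) = kscale (-1) (V i, 0)" by (simp add: kscale_def sscale_def fun_eq_iff)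
    have e2: "(0, sscale (-1) (V i)) = kscale (-1) (0, V i)" by (simp add: kscale_def sscale_def fun_eq_iff)
    show ?case
    proof (intro conjI)
      show "(spar (V i), 0) \<in> K.span Jset" unfolding spar_V e1 by (rule K.span_scale[OF g1])
      show "(0, spar (V i)) \<in> K.span Jset" unfolding spar_V e2 by (rule K.span_scale[OF g2])
    qed (fact g1, fact g2)
  next
    case (add f g)
    have "(f + g, 0 :: 'k ser) = (f, 0) + (g, 0)" "(0 :: 'k ser, f + g) = (0, f) + (0, g)"
      "(spar (f + g), 0 :: 'k ser) = (spar f, 0) + (spar g, 0)" "(0 :: 'k ser, spar (f + g)) = (0, spar f) + (0, spar g)"
      by (simp_all add: spar_add)
    note e = this
    show ?case unfolding e using add.IH by (intro conjI K.span_add) blast+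
  next
    case (scale f c)
    have "(sscale c f, 0 :: 'k ser) = kscale c (f, 0)" "(0 :: 'k ser, sscale c f) = kscale c (0, f)"
      "(spar (sscale c f), 0 :: 'k ser) = kscale c (spar f, 0)" "(0 :: 'k ser, spar (sscale c f)) = kscale c (0, spar f)"
      by (simp_all add: kscale_def spar_scale sscale_def fun_eq_iff)
    note e = this
    show ?case unfolding e using scale.IH by (intro conjI K.span_scale) blast+
  next
    case (mult f g)
    have fH: "f \<in> Htilde" "g \<in> Htilde" using mult Palg_Htilde by auto
    have a: "(smul f g, 0) = kmul (f, 0) (g, 0)" by (simp add: kmul_def)
    have b: "(spar (smul f g), 0) = kmul (spar f, 0) (spar g, 0)" by (simp add: kmul_def spar_smul)
    have c1: "(smul f g, 0) \<in> K.span Jset" unfolding a by (rule span_mul) (use mult in blast)+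
    have c2: "(spar (smul f g), 0) \<in> K.span Jset" unfolding b by (rule span_mul) (use mult in blast)+
    have h: "smul f g \<in> Htilde" "spar (smul f g) \<in> Htilde" using fH by (auto intro: Htilde_smul Htilde_spar)
    have c3: "(0, smul f g) \<in> K.span Jset" unfolding bar_eq[OF h(1)] by (rule span_mul[OF c1 kb])
    have c4: "(0, spar (smul f g)) \<in> K.span Jset" unfolding bar_eq[OF h(2)] by (rule span_mul[OF c2 kb])
    show ?case using c1 c2 c3 c4 by blast
  next
    case (brack f g)
    have fH: "f \<in> Htilde" "g \<in> Htilde" using brack Palg_Htilde by auto
    have a: "(sbr f g, 0) = kmul (0, f) (0, spar g)" by (simp add: kmul_def)
    have b: "(spar (sbr f g), 0) = kmul (0, spar f) (0, g)" by (simp add: kmul_def spar_sbr fH)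
    have c1: "(sbr f g, 0) \<in> K.span Jset" unfolding a by (rule span_mul) (use brack in blast)+
    have c2: "(spar (sbr f g), 0) \<in> K.span Jset" unfolding b by (rule span_mul) (use brack in blast)+
    have h: "sbr f g \<in> Htilde" "spar (sbr f g) \<in> Htilde" using fH by (auto intro: Htilde_sbr Htilde_spar)
    have c3: "(0, sbr f g) \<in> K.span Jset" unfolding bar_eq[OF h(1)] by (rule span_mul[OF c1 kb])
    have c4: "(0, spar (sbr f g)) \<in> K.span Jset" unfolding bar_eq[OF h(2)] by (rule span_mul[OF c2 kb])
    show ?case using c1 c2 c3 c4 by blast
  qed
  show ?thesis
  proof
    fix u :: "'k kan" assume "u \<in> Kan"
    then have "fst u \<in> Palg" "snd u \<in> Palg" unfolding Kan_def by auto
    then have "(fst u, 0) + (0, snd u) \<in> K.span Jset" using main by (intro K.span_add) blast+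
    moreover have "(fst u, 0) + (0, snd u) = u" by (simp add: prod_eq_iff)
    ultimately show "u \<in> K.span Jset" by simp
  qed
qed

theorem part1: "(Kan :: 'k::field kan set) = K.span (\<Union>d. Jdeg d)"
  using Kan_span span_Jset_Kan span_Jdeg by blast



section \<open>Grading\<close>

fun wv :: "nat \<Rightarrow> int \<times> int \<times> int" where
  "wv 0 = (1, 0, 0)"
| "wv (Suc 0) = (0, 1, 0)"
| "wv (Suc (Suc 0)) = (0, 0, 1)"
| "wv (Suc (Suc (Suc j))) = wv j + wv j + wv (Suc j)"

fun bv :: "nat \<Rightarrow> int" where
  "bv 0 = 0"
| "bv (Suc 0) = 0"
| "bv (Suc (Suc 0)) = 0"
| "bv (Suc (Suc (Suc j))) = 2 * bv j + bv (Suc j) - 4"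

definition mw :: "mon \<Rightarrow> int \<times> int \<times> int" where
  "mw m = (\<Sum>b\<in>snd m. wv b) - (\<Sum>a\<in>fst m. wv a)"

definition md :: "mon \<Rightarrow> int" where
  "md m = (\<Sum>b\<in>snd m. bv b) + (\<Sum>a\<in>fst m. 2 - bv a)"

definition homog :: "int \<times> int \<times> int \<Rightarrow> int \<Rightarrow> 'k::field ser \<Rightarrow> bool" where
  "homog W e f \<longleftrightarrow> (\<forall>m. f m \<noteq> 0 \<longrightarrow> finite (fst m) \<and> finite (snd m) \<and> mw m = W \<and> md m = e)"

lemma homogD: "homog W e f \<Longrightarrow> f m \<noteq> 0 \<Longrightarrow> finite (fst m) \<and> finite (snd m) \<and> mw m = W \<and> md m = e"
  unfolding homog_def by blast

lemma homog_zero: "homog W e 0" unfolding homog_def by simp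
lemma homog_add: assumes "homog W e f" "homog W e g" shows "homog W e (f + g)"
  unfolding homog_def
proof (intro allI impI)
  fix m assume "(f + g) m \<noteq> 0"
  then have "f m \<noteq> 0 \<or> g m \<noteq> 0" by auto
  then show "finite (fst m) \<and> finite (snd m) \<and> mw m = W \<and> md m = e" using homogD assms by blast
qed
lemma homog_scale: "homog W e f \<Longrightarrow> homog W e (sscale c f)"
  unfolding homog_def sscale_def by auto
lemma homog_sone: "homog 0 0 sone"
  unfolding homog_def sone_def mw_def md_def by simp
lemma homog_sone': "homog (0, 0, 0) 0 sone"
  unfolding homog_def sone_def mw_def md_def by (simp add: zero_prod_def)
lemma homog_spar: "homog W e f \<Longrightarrow> homog W e (spar f)"
  unfolding homog_def spar_def by simp

lemma mw_split:
  assumes "finite A" "finite B" "a \<subseteq> A" "b \<subseteq> B"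
  shows "mw (A, B) = mw (a, b) + mw (A - a, B - b)"
  using sum.subset_diff[OF assms(3,1), of wv] sum.subset_diff[OF assms(4,2), of wv]
  unfolding mw_def by (simp add: algebra_simps)

lemma md_split:
  assumes "finite A" "finite B" "a \<subseteq> A" "b \<subseteq> B"
  shows "md (A, B) = md (a, b) + md (A - a, B - b)"
  using sum.subset_diff[OF assms(3,1), of "\<lambda>a. 2 - bv a"] sum.subset_diff[OF assms(4,2), of bv]
  unfolding md_def by (simp add: algebra_simps)

lemma mw_ins_snd: "finite b \<Longrightarrow> i \<notin> b \<Longrightarrow> mw (a, insert i b) = mw (a, b) + wv i"
  unfolding mw_def by (simp add: algebra_simps)
lemma mw_ins_fst: "finite a \<Longrightarrow> i \<notin> a \<Longrightarrow> mw (insert i a, b) = mw (a, b) - wv i"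
  unfolding mw_def by (simp add: algebra_simps)
lemma md_ins_snd: "finite b \<Longrightarrow> i \<notin> b \<Longrightarrow> md (a, insert i b) = md (a, b) + bv i"
  unfolding md_def by (simp add: algebra_simps)
lemma md_ins_fst: "finite a \<Longrightarrow> i \<notin> a \<Longrightarrow> md (insert i a, b) = md (a, b) + (2 - bv i)"
  unfolding md_def by (simp add: algebra_simps)

lemma homog_smul:
  assumes f: "homog W1 e1 f" and g: "homog W2 e2 g"
  shows "homog (W1 + W2) (e1 + e2) (smul f g)"
  unfolding homog_def
proof (intro allI impI)
  fix m assume "smul f g m \<noteq> 0"
  from smul_nz[OF this] obtain a1 b1 where ab: "finite (fst m)" "finite (snd m)" "a1 \<subseteq> fst m" "b1 \<subseteq> snd m"
    "f (a1,b1) \<noteq> 0" "g (fst m - a1, snd m - b1) \<noteq> 0" by blast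
  have F: "mw (a1,b1) = W1" "md (a1,b1) = e1" using homogD[OF f ab(5)] by auto
  have G: "mw (fst m - a1, snd m - b1) = W2" "md (fst m - a1, snd m - b1) = e2" using homogD[OF g ab(6)] by auto
  have "mw m = W1 + W2" using mw_split[OF ab(1-4)] F G by simp
  moreover have "md m = e1 + e2" using md_split[OF ab(1-4)] F G by simp
  ultimately show "finite (fst m) \<and> finite (snd m) \<and> mw m = W1 + W2 \<and> md m = e1 + e2" using ab by simp
qed

lemma homog_sbr:
  assumes f: "homog W1 e1 f" and g: "homog W2 e2 g"
  shows "homog (W1 + W2) (e1 + e2 - 2) (sbr f g)"
  unfolding homog_def
proof (intro allI impI)
  fix m assume "sbr f g m \<noteq> 0"
  from sbr_nz[OF this] obtain i where "smul (dRy i f) (dLx i g) m \<noteq> 0 \<or> smul (dRx i f) (dLy i g) m \<noteq> 0" by blast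
  then show "finite (fst m) \<and> finite (snd m) \<and> mw m = W1 + W2 \<and> md m = e1 + e2 - 2"
  proof
    assume "smul (dRy i f) (dLx i g) m \<noteq> 0"
    from smul_nz[OF this] obtain a1 b1 where ab: "finite (fst m)" "finite (snd m)" "a1 \<subseteq> fst m" "b1 \<subseteq> snd m"
      "dRy i f (a1,b1) \<noteq> 0" "dLx i g (fst m - a1, snd m - b1) \<noteq> 0" by blast
    have F0: "i \<notin> b1" "f (a1, insert i b1) \<noteq> 0" using dRy_nz[OF ab(5)] by auto
    have G0: "i \<notin> fst m - a1" "g (insert i (fst m - a1), snd m - b1) \<noteq> 0" using dLx_nz[OF ab(6)] by auto
    have fb1: "finite b1" using ab finite_subset by blast
    have fa2: "finite (fst m - a1)" using ab by simp
    have F: "mw (a1,b1) = W1 - wv i" "md (a1,b1) = e1 - bv i" using homogD[OF f F0(2)] mw_ins_snd[OF fb1 F0(1)] md_ins_snd[OF fb1 F0(1)] by auto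
    have G: "mw (fst m - a1, snd m - b1) = W2 + wv i" "md (fst m - a1, snd m - b1) = e2 - 2 + bv i"
      using homogD[OF g G0(2)] mw_ins_fst[OF fa2 G0(1)] md_ins_fst[OF fa2 G0(1)] by auto
    have "mw m = W1 + W2" using mw_split[OF ab(1-4)] F G by simp
    moreover have "md m = e1 + e2 - 2" using md_split[OF ab(1-4)] F G by simp
    ultimately show ?thesis using ab by simp
  next
    assume "smul (dRx i f) (dLy i g) m \<noteq> 0"
    from smul_nz[OF this] obtain a1 b1 where ab: "finite (fst m)" "finite (snd m)" "a1 \<subseteq> fst m" "b1 \<subseteq> snd m"
      "dRx i f (a1,b1) \<noteq> 0" "dLy i g (fst m - a1, snd m - b1) \<noteq> 0" by blast
    have F0: "i \<notin> a1" "f (insert i a1, b1) \<noteq> 0" using dRx_nz[OF ab(5)] by auto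
    have G0: "i \<notin> snd m - b1" "g (fst m - a1, insert i (snd m - b1)) \<noteq> 0" using dLy_nz[OF ab(6)] by auto
    have fa1: "finite a1" using ab finite_subset by blast
    have fb2: "finite (snd m - b1)" using ab by simp
    have F: "mw (a1,b1) = W1 + wv i" "md (a1,b1) = e1 - 2 + bv i" using homogD[OF f F0(2)] mw_ins_fst[OF fa1 F0(1)] md_ins_fst[OF fa1 F0(1)] by auto
    have G: "mw (fst m - a1, snd m - b1) = W2 - wv i" "md (fst m - a1, snd m - b1) = e2 - bv i"
      using homogD[OF g G0(2)] mw_ins_snd[OF fb2 G0(1)] md_ins_snd[OF fb2 G0(1)] by auto
    have "mw m = W1 + W2" using mw_split[OF ab(1-4)] F G by simp
    moreover have "md m = e1 + e2 - 2" using md_split[OF ab(1-4)] F G by simp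
    ultimately show ?thesis using ab by simp
  qed
qed

lemma Aset_Suc: "Aset j (Suc k) = insert (j + 3 * k) (insert (j + 3 * k + 1) (Aset j k))"
  by (auto simp: mem_Aset less_Suc_eq)

lemma wv_rec: "wv (j + 3) = wv j + wv j + wv (j + 1)"
  by (simp add: numeral_3_eq_3)
lemma bv_rec: "bv (j + 3) = 2 * bv j + bv (j + 1) - 4"
  by (simp add: numeral_3_eq_3)

lemma mw_V: "mw (Aset j k, {j + 3 * k}) = wv j"
proof (induction k)
  case 0 then show ?case by (simp add: mw_def Aset_def)
next
  case (Suc k)
  have n: "j + 3 * k \<notin> Aset j k" "j + 3 * k + 1 \<notin> Aset j k" "j + 3 * k \<noteq> j + 3 * k + 1" by (auto simp: mem_Aset)
  have "wv (j + 3 * Suc k) = wv (j + 3 * k) + wv (j + 3 * k) + wv (j + 3 * k + 1)"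
    using wv_rec[of "j + 3 * k"] by (simp add: algebra_simps)
  then show ?case using Suc n unfolding mw_def Aset_Suc by (simp add: algebra_simps)
qed

lemma md_V: "md (Aset j k, {j + 3 * k}) = bv j"
proof (induction k)
  case 0 then show ?case by (simp add: md_def Aset_def)
next
  case (Suc k)
  have n: "j + 3 * k \<notin> Aset j k" "j + 3 * k + 1 \<notin> Aset j k" "j + 3 * k \<noteq> j + 3 * k + 1" by (auto simp: mem_Aset)
  have "bv (j + 3 * Suc k) = 2 * bv (j + 3 * k) + bv (j + 3 * k + 1) - 4"
    using bv_rec[of "j + 3 * k"] by (simp add: algebra_simps)
  then show ?case using Suc n unfolding md_def Aset_Suc by (simp add: algebra_simps)
qed

lemma homog_V: "homog (wv j) (bv j) (V j)"
  unfolding homog_def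
proof (intro allI impI)
  fix m :: mon assume "V j m \<noteq> 0"
  then obtain k where m: "m = (Aset j k, {j + 3 * k})" using V_nz by blast
  show "finite (fst m) \<and> finite (snd m) \<and> mw m = wv j \<and> md m = bv j"
    unfolding m using mw_V md_V by simp
qed

definition Wd :: "nat \<times> nat \<times> nat \<times> nat \<Rightarrow> int \<times> int \<times> int" where
  "Wd d = (case d of (a, b, c, e) \<Rightarrow> (int a, int b, int c))"
definition n4 :: "nat \<times> nat \<times> nat \<times> nat \<Rightarrow> nat" where
  "n4 d = (case d of (a, b, c, e) \<Rightarrow> e)"

definition hom :: "nat \<times> nat \<times> nat \<times> nat \<Rightarrow> 'k::field kan \<Rightarrow> bool" where
  "hom d u \<longleftrightarrow> homog (Wd d) (- int (n4 d)) (fst u) \<and> homog (Wd d) (1 - int (n4 d)) (snd u)"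

lemma Wd_n4_inj: "Wd d = Wd d' \<Longrightarrow> n4 d = n4 d' \<Longrightarrow> d = d'"
  unfolding Wd_def n4_def by (cases d, cases d') auto

lemma jmon_hom: "jmon u d \<Longrightarrow> hom d u"
proof (induction rule: jmon.induct)
  case unit then show ?case
    by (simp add: hom_def kone_def Wd_def n4_def homog_sone' homog_zero zero_prod_def)
next
  case V0 then show ?case
    using homog_V[of 0] by (simp add: hom_def kV_def Wd_def n4_def homog_zero)
next
  case V1 then show ?case
    using homog_V[of 1] by (simp add: hom_def kV_def Wd_def n4_def homog_zero)
next
  case V2 then show ?case
    using homog_V[of 2] by (simp add: hom_def kV_def Wd_def n4_def homog_zero numeral_2_eq_2)
next
  case bar1 then show ?case
    by (simp add: hom_def kbar1_def Wd_def n4_def homog_sone' homog_zero zero_prod_def)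
next
  case (prod u a1 a2 a3 a4 v b1 b2 b3 b4)
  let ?W = "(int (a1 + b1), int (a2 + b2), int (a3 + b3))"
  have W: "?W = (int a1, int a2, int a3) + (int b1, int b2, int b3)" by simp
  have u: "homog (int a1, int a2, int a3) (- int a4) (fst u)" "homog (int a1, int a2, int a3) (1 - int a4) (snd u)"
    using prod.IH(1) by (auto simp: hom_def Wd_def n4_def)
  have v: "homog (int b1, int b2, int b3) (- int b4) (fst v)" "homog (int b1, int b2, int b3) (1 - int b4) (snd v)"
    using prod.IH(2) by (auto simp: hom_def Wd_def n4_def)
  have "homog ?W (- int (a4 + b4)) (smul (fst u) (fst v) + sbr (snd u) (spar (snd v)))"
  proof (rule homog_add)
    have e: "- int (a4 + b4) = (- int a4) + (- int b4)" by simp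
    show "homog ?W (- int (a4 + b4)) (smul (fst u) (fst v))"
      unfolding W e by (rule homog_smul[OF u(1) v(1)])
    have e: "- int (a4 + b4) = (1 - int a4) + (1 - int b4) - 2" by simp
    show "homog ?W (- int (a4 + b4)) (sbr (snd u) (spar (snd v)))"
      unfolding W e by (rule homog_sbr[OF u(2) homog_spar[OF v(2)]])
  qed
  moreover have "homog ?W (1 - int (a4 + b4)) (smul (snd u) (spar (fst v)) + smul (fst u) (snd v))"
  proof (rule homog_add)
    have e: "1 - int (a4 + b4) = (1 - int a4) + (- int b4)" by simp
    show "homog ?W (1 - int (a4 + b4)) (smul (snd u) (spar (fst v)))"
      unfolding W e by (rule homog_smul[OF u(2) homog_spar[OF v(1)]])
    have e: "1 - int (a4 + b4) = (- int a4) + (1 - int b4)" by simp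
    show "homog ?W (1 - int (a4 + b4)) (smul (fst u) (snd v))"
      unfolding W e by (rule homog_smul[OF u(1) v(2)])
  qed
  ultimately show ?case by (simp add: hom_def Wd_def n4_def kmul_def)
qed

lemma hom_sub: "K.subspace {u :: 'k::field kan. hom d u}"
  unfolding K.subspace_def hom_def
  by (auto simp: homog_zero homog_add homog_scale kscale_def zero_prod_def)

lemma Jdeg_hom: "u \<in> Jdeg d \<Longrightarrow> hom d u"
proof -
  assume "u \<in> Jdeg d"
  moreover have "Jdeg d \<subseteq> {u :: 'a::field kan. hom d u}"
    unfolding Jdeg_def by (rule K.span_minimal) (auto simp: jmon_hom hom_sub)
  ultimately show ?thesis by blast
qed

lemma Jdeg_sub: "K.subspace (Jdeg d)"
  unfolding Jdeg_def by (rule K.subspace_span)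

definition proj :: "int \<times> int \<times> int \<Rightarrow> int \<Rightarrow> 'k::field ser \<Rightarrow> 'k ser" where
  "proj W e f m = (if mw m = W \<and> md m = e then f m else 0)"

definition kproj :: "nat \<times> nat \<times> nat \<times> nat \<Rightarrow> 'k::field kan \<Rightarrow> 'k kan" where
  "kproj d u = (proj (Wd d) (- int (n4 d)) (fst u), proj (Wd d) (1 - int (n4 d)) (snd u))"

lemma kproj_add: "kproj d (u + v) = kproj d u + kproj d v"
  by (simp add: kproj_def proj_def fun_eq_iff)
lemma kproj_scale: "kproj d (kscale c u) = kscale c (kproj d u)"
  by (simp add: kproj_def proj_def kscale_def sscale_def fun_eq_iff)
lemma kproj_zero: "kproj d 0 = 0"
  by (simp add: kproj_def proj_def fun_eq_iff zero_prod_def)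
lemma kproj_sum: "kproj d (sum f A) = (\<Sum>a\<in>A. kproj d (f a))"
  by (induction A rule: infinite_finite_induct) (auto simp: kproj_zero kproj_add)

lemma kproj_same: "hom d u \<Longrightarrow> kproj d u = u"
  unfolding hom_def kproj_def proj_def homog_def by (auto simp: fun_eq_iff prod_eq_iff)

lemma kproj_other: "hom e u \<Longrightarrow> e \<noteq> d \<Longrightarrow> kproj d u = 0"
proof -
  assume h: "hom e u" and ne: "e \<noteq> d"
  have "fst (kproj d u) m = 0" for m
  proof (cases "fst u m = 0")
    case False
    then have "mw m = Wd e \<and> md m = - int (n4 e)" using h unfolding hom_def homog_def by blast
    then have "\<not> (mw m = Wd d \<and> md m = - int (n4 d))" using ne Wd_n4_inj[of e d] by auto
    then show ?thesis by (auto simp: kproj_def proj_def)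
  qed (simp add: kproj_def proj_def)
  moreover have "snd (kproj d u) m = 0" for m
  proof (cases "snd u m = 0")
    case False
    then have "mw m = Wd e \<and> md m = 1 - int (n4 e)" using h unfolding hom_def homog_def by blast
    then have "\<not> (mw m = Wd d \<and> md m = 1 - int (n4 d))" using ne Wd_n4_inj[of e d] by auto
    then show ?thesis by (auto simp: kproj_def proj_def)
  qed (simp add: kproj_def proj_def)
  ultimately show "kproj d u = 0" by (simp add: prod_eq_iff fun_eq_iff)
qed

theorem part2:
  fixes u :: "nat \<times> nat \<times> nat \<times> nat \<Rightarrow> 'k::field kan"
  assumes "finite D" "\<forall>d\<in>D. u d \<in> Jdeg d" "(\<Sum>d\<in>D. u d) = 0"
  shows "\<forall>d\<in>D. u d = 0"
proof
  fix d assume d: "d \<in> D"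
  have "kproj d (\<Sum>e\<in>D. u e) = (\<Sum>e\<in>D. kproj d (u e))" by (rule kproj_sum)
  also have "\<dots> = kproj d (u d)"
  proof (rule trans[OF sum_single_nz[where a = d]])
    show "finite D" by fact
    show "\<And>x. x \<in> D \<Longrightarrow> x \<noteq> d \<Longrightarrow> kproj d (u x) = 0"
      using assms(2) Jdeg_hom kproj_other by blast
  qed (use d in simp)
  also have "\<dots> = u d" using assms(2) d Jdeg_hom kproj_same by blast
  finally show "u d = 0" using assms(3) by (simp add: kproj_zero)
qed

lemma kproj_span:
  assumes "u \<in> K.span (\<Union>e. Jdeg e)"
  shows "kproj d u \<in> Jdeg d"
proof -
  have "u \<in> {x. kproj d x \<in> Jdeg d}"
  proof (rule K.span_subspace_induct[OF assms])
    show "K.subspace {x. kproj d x \<in> Jdeg d}"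
      using Jdeg_sub[of d] unfolding K.subspace_def by (auto simp: kproj_add kproj_scale kproj_zero)
    fix x assume "x \<in> (\<Union>e. Jdeg e)"
    then obtain e where x: "x \<in> Jdeg e" by blast
    show "x \<in> {x. kproj d x \<in> Jdeg d}"
    proof (cases "e = d")
      case True then show ?thesis using x Jdeg_hom kproj_same by fastforce
    next
      case False
      have k0: "kproj d x = 0" using kproj_other[OF Jdeg_hom[OF x] False] .
      show ?thesis unfolding mem_Collect_eq k0 Jdeg_def by (rule K.span_zero)
    qed
  qed
  then show ?thesis by simp
qed

lemma hom_Kan_Jdeg: "u \<in> Kan \<Longrightarrow> hom d u \<Longrightarrow> u \<in> Jdeg d"
  using kproj_span[of u d] part1 kproj_same by fastforce



section \<open>Finite dimensionality of the components\<close>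

lemma kmul_kone_left: "v \<in> Kan \<Longrightarrow> kmul kone v = v"
  using Kan_Htilde[of v] by (simp add: kmul_def kone_def smul_sone_left prod_eq_iff)

lemma kmul_kone_right: "u \<in> Kan \<Longrightarrow> kmul u kone = u"
  using Kan_Htilde[of u] by (simp add: kmul_def kone_def smul_sone_right prod_eq_iff)

lemma jmon_deg0: "jmon u d \<Longrightarrow> d = (0, 0, 0, 0) \<Longrightarrow> u = kone"
proof (induction rule: jmon.induct)
  case (prod u a1 a2 a3 a4 v b1 b2 b3 b4)
  then have "u = kone" "v = kone" by auto
  then show ?case using kmul_kone_left[of kone] jmon_Kan[OF jmon.unit] by simp
qed auto

lemma jmon_cases:
  "jmon u d \<Longrightarrow> u \<in> {kone, kV 0, kV 1, kV 2, kbar1} \<or>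
    (\<exists>x y a1 a2 a3 a4 b1 b2 b3 b4. jmon x (a1, a2, a3, a4) \<and> jmon y (b1, b2, b3, b4) \<and>
       (a1, a2, a3, a4) \<noteq> (0, 0, 0, 0) \<and> (b1, b2, b3, b4) \<noteq> (0, 0, 0, 0) \<and>
       d = (a1 + b1, a2 + b2, a3 + b3, a4 + b4) \<and> u = kmul x y)"
proof (induction rule: jmon.induct)
  case (prod u a1 a2 a3 a4 v b1 b2 b3 b4)
  show ?case
  proof (cases "(a1, a2, a3, a4) = (0, 0, 0, 0)")
    case True
    then have "u = kone" using jmon_deg0[OF prod.hyps(1)] by simp
    then have e: "kmul u v = v" using kmul_kone_left jmon_Kan[OF prod.hyps(2)] by simp
    show ?thesis unfolding e using prod.IH(2) True by auto
  next
    case F1: False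
    show ?thesis
    proof (cases "(b1, b2, b3, b4) = (0, 0, 0, 0)")
      case True
      then have "v = kone" using jmon_deg0[OF prod.hyps(2)] by simp
      then have e: "kmul u v = u" using kmul_kone_right jmon_Kan[OF prod.hyps(1)] by simp
      show ?thesis unfolding e using prod.IH(1) True by auto
    next
      case False
      have "kmul u v = kmul u v" ..
      then show ?thesis using F1 False prod.hyps(1,2) by (intro disjI2 exI conjI) simp_all
    qed
  qed
qed simp_all

lemma finite_jmon_aux:
  "d1 + d2 + d3 + d4 \<le> n \<Longrightarrow> finite {u :: 'k::field kan. jmon u (d1, d2, d3, d4)}"
proof (induction n arbitrary: d1 d2 d3 d4 rule: less_induct)
  case (less n)
  define S where "S = {..d1} \<times> {..d2} \<times> {..d3} \<times> {..d4}"
  define S' where "S' = {a \<in> S. a \<noteq> (0, 0, 0, 0) \<and> a \<noteq> (d1, d2, d3, d4)}"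
  define sub where "sub a = (case a of (a1, a2, a3, a4) \<Rightarrow> (d1 - a1, d2 - a2, d3 - a3, d4 - a4))" for a
  define F where "F a = (\<lambda>(x, y). kmul x y) ` ({x :: 'k kan. jmon x a} \<times> {y. jmon y (sub a)})" for a
  have IH: "finite {u :: 'k kan. jmon u (e1, e2, e3, e4)}" if "e1 + e2 + e3 + e4 < d1 + d2 + d3 + d4" for e1 e2 e3 e4
    using less.IH[of "e1 + e2 + e3 + e4" e1 e2 e3 e4] less.prems that by simp
  have fS: "finite S'" unfolding S'_def S_def by auto
  have fF: "finite (F a)" if a: "a \<in> S'" for a
  proof -
    obtain a1 a2 a3 a4 where ae: "a = (a1, a2, a3, a4)" by (cases a) auto
    have le: "a1 \<le> d1" "a2 \<le> d2" "a3 \<le> d3" "a4 \<le> d4" using a unfolding S'_def S_def ae by auto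
    have ne: "a \<noteq> (0, 0, 0, 0)" "a \<noteq> (d1, d2, d3, d4)" using a unfolding S'_def by auto
    have lt1: "a1 + a2 + a3 + a4 < d1 + d2 + d3 + d4" using le ne unfolding ae by auto
    have f1: "finite {x :: 'k kan. jmon x a}" unfolding ae using IH[OF lt1] .
    have lt2: "(d1 - a1) + (d2 - a2) + (d3 - a3) + (d4 - a4) < d1 + d2 + d3 + d4" using le ne unfolding ae by auto
    have f2: "finite {y :: 'k kan. jmon y (sub a)}" unfolding ae sub_def prod.case
      using IH[OF lt2] .
    show ?thesis unfolding F_def using f1 f2 by auto
  qed
  have "{u :: 'k kan. jmon u (d1, d2, d3, d4)} \<subseteq> {kone, kV 0, kV 1, kV 2, kbar1} \<union> (\<Union>a\<in>S'. F a)"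
  proof
    fix u :: "'k kan" assume "u \<in> {u. jmon u (d1, d2, d3, d4)}"
    then have "jmon u (d1, d2, d3, d4)" by simp
    from jmon_cases[OF this] show "u \<in> {kone, kV 0, kV 1, kV 2, kbar1} \<union> (\<Union>a\<in>S'. F a)"
    proof
      assume "\<exists>x y a1 a2 a3 a4 b1 b2 b3 b4. jmon x (a1, a2, a3, a4) \<and> jmon y (b1, b2, b3, b4) \<and>
       (a1, a2, a3, a4) \<noteq> (0, 0, 0, 0) \<and> (b1, b2, b3, b4) \<noteq> (0, 0, 0, 0) \<and>
       (d1, d2, d3, d4) = (a1 + b1, a2 + b2, a3 + b3, a4 + b4) \<and> u = kmul x y"
      then obtain x y a1 a2 a3 a4 b1 b2 b3 b4 where h: "jmon x (a1, a2, a3, a4)" "jmon y (b1, b2, b3, b4)"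
        "(a1, a2, a3, a4) \<noteq> (0, 0, 0, 0)" "(b1, b2, b3, b4) \<noteq> (0, 0, 0, 0)"
        "(d1, d2, d3, d4) = (a1 + b1, a2 + b2, a3 + b3, a4 + b4)" "u = kmul x y" by blast
      have inS: "(a1, a2, a3, a4) \<in> S'" using h(3,4,5) unfolding S'_def S_def by auto
      have "sub (a1, a2, a3, a4) = (b1, b2, b3, b4)" using h(5) unfolding sub_def by auto
      then have "u \<in> F (a1, a2, a3, a4)" unfolding F_def using h by auto
      then show ?thesis using inS by blast
    qed auto
  qed
  moreover have "finite ({kone, kV 0, kV 1, kV 2, kbar1} \<union> (\<Union>a\<in>S'. F a))" using fS fF by auto
  ultimately show ?case using finite_subset by blast
qed

lemma finite_jmon: "finite {u. jmon u d}"
  using finite_jmon_aux[OF order_refl] by (cases d) auto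

lemma dim_lb:
  fixes B :: "'k::field kan set"
  assumes "B \<subseteq> Jdeg d" "K.independent B" "finite B"
  shows "card B \<le> K.dim (Jdeg d :: 'k kan set)"
proof -
  obtain C where C: "B \<subseteq> C" "C \<subseteq> Jdeg d" "K.independent C" "Jdeg d \<subseteq> K.span C"
    using K.maximal_independent_subset_extend[OF assms(1,2)] by blast
  have "C \<subseteq> K.span {u. jmon u d}" using C(2) unfolding Jdeg_def .
  from K.independent_span_bound[OF finite_jmon C(3) this] have fC: "finite C" by simp
  have "card C = K.dim (Jdeg d :: 'k kan set)" using K.basis_card_eq_dim[OF C(2) C(4) C(3)] .
  moreover have "card B \<le> card C" using card_mono[OF fC C(1)] .
  ultimately show ?thesis by simp
qed



section \<open>All V_j lie in P\<close>

definition U :: "nat \<Rightarrow> 'k::field ser" where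
  "U j m = (if \<exists>k. m = (insert (j + 1) (Aset (j + 3) k), {j + 3 + 3 * k}) then 1 else 0)"

lemma U_nz: "U j m \<noteq> 0 \<longleftrightarrow> (\<exists>k. m = (insert (j + 1) (Aset (j + 3) k), {j + 3 + 3 * k}))"
  unfolding U_def by auto

lemma V_nzE:
  assumes "V j (a, b) \<noteq> 0" obtains k where "a = Aset j k" "b = {j + 3 * k}"
proof -
  have "\<exists>k. (a, b) = (Aset j k, {j + 3 * k})" using assms by (simp only: V_nz)
  then obtain k where "(a, b) = (Aset j k, {j + 3 * k})" by (elim exE)
  then show ?thesis using that by simp
qed

lemma U_nzE:
  assumes "U j (a, b) \<noteq> 0" obtains k where "a = insert (j + 1) (Aset (j + 3) k)" "b = {j + 3 + 3 * k}"
proof -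
  have "\<exists>k. (a, b) = (insert (j + 1) (Aset (j + 3) k), {j + 3 + 3 * k})" using assms by (simp only: U_nz)
  then obtain k where "(a, b) = (insert (j + 1) (Aset (j + 3) k), {j + 3 + 3 * k})" by (elim exE)
  then show ?thesis using that by simp
qed

lemma Aset_0[simp]: "Aset j 0 = {}" by (simp add: Aset_def)

lemma Aset_Suc0: "Aset j (Suc k) = insert j (insert (j + 1) (Aset (j + 3) k))"
proof (rule set_eqI)
  fix x
  show "x \<in> Aset j (Suc k) \<longleftrightarrow> x \<in> insert j (insert (j + 1) (Aset (j + 3) k))"
  proof
    assume "x \<in> Aset j (Suc k)"
    then obtain n where n: "n < Suc k" "x = j + 3 * n \<or> x = j + 3 * n + 1" unfolding mem_Aset by blast
    show "x \<in> insert j (insert (j + 1) (Aset (j + 3) k))"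
    proof (cases n)
      case 0 then show ?thesis using n by auto
    next
      case (Suc n')
      then have "n' < k" "x = (j + 3) + 3 * n' \<or> x = (j + 3) + 3 * n' + 1" using n by auto
      then have "x \<in> Aset (j + 3) k" unfolding mem_Aset by blast
      then show ?thesis by simp
    qed
  next
    assume "x \<in> insert j (insert (j + 1) (Aset (j + 3) k))"
    then consider "x = j" | "x = j + 1" | "x \<in> Aset (j + 3) k" by blast
    then show "x \<in> Aset j (Suc k)"
    proof cases
      case 1 then show ?thesis unfolding mem_Aset by (intro exI[of _ 0]) auto
    next
      case 2 then show ?thesis unfolding mem_Aset by (intro exI[of _ 0]) auto
    next
      case 3
      then obtain n where "n < k" "x = j + 3 + 3 * n \<or> x = j + 3 + 3 * n + 1" unfolding mem_Aset by blast
      then show ?thesis unfolding mem_Aset by (intro exI[of _ "Suc n"]) auto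
    qed
  qed
qed

lemma Aset_ge: "x \<in> Aset j k \<Longrightarrow> j \<le> x"
  by (auto simp: mem_Aset)

lemma Aset_j: "j \<in> Aset j k \<longleftrightarrow> 0 < k"
  by (auto simp: mem_Aset)

lemma Aset_j1: "j + 1 \<in> Aset j k \<longleftrightarrow> 0 < k"
  by (auto simp: mem_Aset)

lemma Aset_3: "j \<notin> Aset (j + 3) k" "j + 1 \<notin> Aset (j + 3) k" "j + 2 \<notin> Aset (j + 3) k"
  by (auto simp: mem_Aset)

lemma insert_cancel: "x \<notin> A \<Longrightarrow> x \<notin> B \<Longrightarrow> insert x A = insert x B \<Longrightarrow> A = B"
  by (simp add: insert_ident)

lemma insert_singleton: "i \<notin> b \<Longrightarrow> insert i b = {c} \<Longrightarrow> b = {} \<and> i = c"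
  by auto

lemma V_single: "V j ({}, {i}) = (if i = j then 1 else 0)"
proof -
  have "(\<exists>k. ({}, {i}) = (Aset j k, {j + 3 * k})) \<longleftrightarrow> i = j"
  proof
    assume "\<exists>k. ({}, {i}) = (Aset j k, {j + 3 * k})"
    then obtain k where "{} = Aset j k" "i = j + 3 * k" by auto
    then show "i = j" using Aset_j[of j k] by auto
  qed (auto intro: exI[of _ 0])
  then show ?thesis by (simp add: V_eq)
qed

lemma dRy_V0: "dRy i (V j) ({}, {}) = (if i = j then 1 else 0)"
  by (simp add: dRy_def V_single)
lemma dLy_V0: "dLy i (V j) ({}, {}) = (if i = j then 1 else 0)"
  by (simp add: dLy_def V_single)

lemma V_insj: "j \<notin> A \<Longrightarrow> V j (insert j A, B) = U j (A, B)"
proof -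
  assume jA: "j \<notin> A"
  have "(\<exists>l. (insert j A, B) = (Aset j l, {j + 3 * l})) \<longleftrightarrow>
        (\<exists>k. (A, B) = (insert (j + 1) (Aset (j + 3) k), {j + 3 + 3 * k}))"
  proof
    assume "\<exists>l. (insert j A, B) = (Aset j l, {j + 3 * l})"
    then obtain l where l: "insert j A = Aset j l" "B = {j + 3 * l}" by auto
    then have "0 < l" using Aset_j[of j l] by auto
    then obtain k where k: "l = Suc k" using gr0_conv_Suc by blast
    have "insert j A = insert j (insert (j + 1) (Aset (j + 3) k))" using l(1) k Aset_Suc0 by simp
    then have "A = insert (j + 1) (Aset (j + 3) k)"
      by (rule insert_cancel[OF jA, rotated]) (use Aset_3 in auto)
    then show "\<exists>k. (A, B) = (insert (j + 1) (Aset (j + 3) k), {j + 3 + 3 * k})"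
      using l(2) k by (intro exI[of _ k]) auto
  next
    assume "\<exists>k. (A, B) = (insert (j + 1) (Aset (j + 3) k), {j + 3 + 3 * k})"
    then obtain k where k: "A = insert (j + 1) (Aset (j + 3) k)" "B = {j + 3 + 3 * k}" by auto
    then show "\<exists>l. (insert j A, B) = (Aset j l, {j + 3 * l})"
      by (intro exI[of _ "Suc k"]) (simp add: Aset_Suc0)
  qed
  then show ?thesis by (simp add: V_eq U_def)
qed

lemma U_nz_fst: "(U j (A, B) :: 'k::field) \<noteq> 0 \<Longrightarrow> j \<notin> A \<and> finite A \<and> finite B \<and> (\<forall>a\<in>A. j < a) \<and> odd (card A) \<and> card B = 1"
proof -
  assume "(U j (A, B) :: 'k) \<noteq> 0"
  then have "\<exists>k. (A, B) = (insert (j + 1) (Aset (j + 3) k), {j + 3 + 3 * k})" by (simp only: U_nz)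
  then obtain k where "(A, B) = (insert (j + 1) (Aset (j + 3) k), {j + 3 + 3 * k})" by (elim exE)
  then have k: "A = insert (j + 1) (Aset (j + 3) k)" "B = {j + 3 + 3 * k}" by simp_all
  have c: "card A = 2 * k + 1" using k(1) Aset_3(2)[of j k] card_Aset[of "j + 3" k] by simp
  then have c2: "odd (card A)" by simp
  have g: "\<forall>a\<in>A. j < a"
  proof
    fix a assume "a \<in> A"
    then have "a = j + 1 \<or> a \<in> Aset (j + 3) k" using k(1) by blast
    then show "j < a" using Aset_ge[of a "j + 3" k] by auto
  qed
  have "j \<notin> A" using g by blast
  moreover have "finite A" "finite B" "card B = 1" using k by auto
  ultimately show ?thesis using g c2 by blast
qed

lemma U_j_notin: "j \<in> A \<Longrightarrow> (U j (A, B) :: 'k::field) = 0"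
proof (rule ccontr)
  assume "j \<in> A" "(U j (A, B) :: 'k) \<noteq> 0"
  then show False using U_nz_fst[of j A B] by simp
qed

lemma dLx_Vj: "dLx j (V j) m = (U j m :: 'k::field)"
proof -
  obtain A B where m: "m = (A, B)" by force
  show ?thesis
  proof (cases "j \<in> A")
    case True
    then show ?thesis using U_j_notin[OF True] by (simp add: m dLx_def)
  next
    case False
    show ?thesis
    proof (cases "(U j (A, B) :: 'k) = 0")
      case True then show ?thesis using False by (simp add: m dLx_def V_insj)
    next
      case nz: False
      have h: "\<forall>a\<in>A. j < a" using U_nz_fst[OF nz] by simp
      then have "{a \<in> A. a < j} = {}" by auto
      then have c: "card {a \<in> A. a < j} = 0" by (simp only: card.empty)
      show ?thesis using False by (simp add: m dLx_def V_insj c)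
    qed
  qed
qed

lemma dRx_Vj: "dRx j (V j) m = (U j m :: 'k::field)"
proof -
  obtain A B where m: "m = (A, B)" by force
  show ?thesis
  proof (cases "j \<in> A")
    case True
    then show ?thesis using U_j_notin[OF True] by (simp add: m dRx_def)
  next
    case False
    show ?thesis
    proof (cases "(U j (A, B) :: 'k) = 0")
      case True then show ?thesis using False by (simp add: m dRx_def V_insj)
    next
      case nz: False
      have h: "finite A" "\<forall>a\<in>A. j < a" "odd (card A)" "card B = 1" using U_nz_fst[OF nz] by simp_all
      have "{a \<in> A. j < a} = A" using h by auto
      then have "even (card {a \<in> A. j < a} + card B)" using h by simp
      then have "((-1)::'k) ^ (card {a \<in> A. j < a} + card B) = 1" by (rule neg_one_even_power)
      then show ?thesis using False by (simp add: m dRx_def V_insj)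
    qed
  qed
qed

lemma msign_empty_left: "msign ({}, {}) m = 1"
  by (simp add: msign_def inv_def)
lemma msign_empty_right: "msign m ({}, {}) = 1"
  by (simp add: msign_def inv_def)

lemma U_fin: "(U j m :: 'k::field) \<noteq> 0 \<Longrightarrow> finite (fst m) \<and> finite (snd m)"
proof -
  assume "(U j m :: 'k) \<noteq> 0"
  then have "(U j (fst m, snd m) :: 'k) \<noteq> 0" by simp
  from U_nz_fst[OF this] show ?thesis by blast
qed

lemma VV_t1: "smul (dRy i (V j)) (dLx i (V j)) m = (if i = j then (U j m :: 'k::field) else 0)"
proof -
  have uniq: "(a1, b1) = ({}, {})" if s: "a1 \<subseteq> fst m" "b1 \<subseteq> snd m" and f: "dRy i (V j :: 'k ser) (a1, b1) \<noteq> 0"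
      and g: "dLx i (V j :: 'k ser) (fst m - a1, snd m - b1) \<noteq> 0" for a1 b1
  proof -
    from dRy_nz[OF f] have f1: "i \<notin> b1" "(V j :: 'k ser) (a1, insert i b1) \<noteq> 0" by auto
    from V_nzE[OF f1(2)] obtain k where k0: "a1 = Aset j k" "insert i b1 = {j + 3 * k}" .
    then have b1: "b1 = {}" "i = j + 3 * k" using f1(1) by auto
    from dLx_nz[OF g] have g1: "i \<notin> fst m - a1" "(V j :: 'k ser) (insert i (fst m - a1), snd m - b1) \<noteq> 0" by auto
    from V_nzE[OF g1(2)] obtain l where l0: "insert i (fst m - a1) = Aset j l" by metis
    have "k = 0"
    proof (rule ccontr)
      assume "k \<noteq> 0"
      then have "j \<in> a1" using k0(1) Aset_j by auto
      moreover have "i \<in> Aset j l" using l0 by auto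
      then have "0 < l" by (cases l) auto
      then have "j \<in> insert i (fst m - a1)" using l0 Aset_j by auto
      moreover have "j \<noteq> i" using b1(2) \<open>k \<noteq> 0\<close> by simp
      ultimately show False by auto
    qed
    then show "(a1, b1) = ({}, {})" using k0(1) b1 by simp
  qed
  have "smul (dRy i (V j)) (dLx i (V j :: 'k ser)) m = (if finite (fst m) \<and> finite (snd m)
      then msign ({}, {}) m * dRy i (V j :: 'k ser) ({}, {}) * dLx i (V j :: 'k ser) m else 0)"
    using smul_one_term[where p = "({}, {})" and m = m and f = "dRy i (V j :: 'k ser)" and g = "dLx i (V j :: 'k ser)", OF uniq]
    by simp
  also have "\<dots> = (if i = j then (U j m :: 'k) else 0)"
    using U_fin[of j m] by (auto simp: msign_empty_left dRy_V0 dLx_Vj)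
  finally show ?thesis .
qed

lemma VV_t2: "smul (dRx i (V j)) (dLy i (V j)) m = (if i = j then (U j m :: 'k::field) else 0)"
proof -
  have uniq: "(a1, b1) = m" if s: "a1 \<subseteq> fst m" "b1 \<subseteq> snd m" and f: "dRx i (V j :: 'k ser) (a1, b1) \<noteq> 0"
      and g: "dLy i (V j :: 'k ser) (fst m - a1, snd m - b1) \<noteq> 0" for a1 b1
  proof -
    from dRx_nz[OF f] have f1: "i \<notin> a1" "(V j :: 'k ser) (insert i a1, b1) \<noteq> 0" by auto
    from V_nzE[OF f1(2)] obtain k where k0: "insert i a1 = Aset j k" by metis
    from dLy_nz[OF g] have g1: "i \<notin> snd m - b1" "(V j :: 'k ser) (fst m - a1, insert i (snd m - b1)) \<noteq> 0" by auto
    from V_nzE[OF g1(2)] obtain l where l0: "fst m - a1 = Aset j l" "insert i (snd m - b1) = {j + 3 * l}" .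
    then have b2: "snd m - b1 = {}" "i = j + 3 * l" using g1(1) by auto
    have "l = 0"
    proof (rule ccontr)
      assume "l \<noteq> 0"
      then have "j \<in> fst m - a1" using l0(1) Aset_j by auto
      moreover have "i \<in> Aset j k" using k0 by auto
      then have "0 < k" by (cases k) auto
      then have "j \<in> insert i a1" using k0 Aset_j by auto
      moreover have "j \<noteq> i" using b2(2) \<open>l \<noteq> 0\<close> by simp
      ultimately show False by auto
    qed
    then have "fst m - a1 = {}" using l0(1) by simp
    then show "(a1, b1) = m" using s b2(1) by (simp add: prod_eq_iff)
  qed
  have "smul (dRx i (V j)) (dLy i (V j :: 'k ser)) m = (if finite (fst m) \<and> finite (snd m)
      then msign m ({}, {}) * dRx i (V j :: 'k ser) m * dLy i (V j :: 'k ser) ({}, {}) else 0)"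
    using smul_one_term[where p = m and m = m and f = "dRx i (V j :: 'k ser)" and g = "dLy i (V j :: 'k ser)", OF uniq]
    by simp
  also have "\<dots> = (if i = j then (U j m :: 'k) else 0)"
    using U_fin[of j m] by (auto simp: msign_empty_right dLy_V0 dRx_Vj)
  finally show ?thesis .
qed

lemma sbr_VV: "sbr (V j) (V j) = sscale 2 (U j :: 'k::field ser)"
proof (rule ext)
  fix m
  have "(\<lambda>i. smul (dRy i (V j)) (dLx i (V j)) m + smul (dRx i (V j)) (dLy i (V j)) m)
      = (\<lambda>i. if i = j then 2 * (U j m :: 'k) else 0)"
    by (rule ext) (simp add: VV_t1 VV_t2)
  then have "sbr (V j) (V j) m = Sum_any (\<lambda>i. if i = j then 2 * (U j m :: 'k) else 0)"
    unfolding sbr_def by (rule arg_cong[where f = Sum_any])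
  also have "\<dots> = 2 * U j m" by simp
  finally show "sbr (V j) (V j) m = sscale 2 (U j :: 'k ser) m" by (simp add: sscale_def)
qed



lemma U_ins: "j + 1 \<notin> A \<Longrightarrow> (U j (insert (j + 1) A, B) :: 'k::field) = V (j + 3) (A, B)"
proof -
  assume jA: "j + 1 \<notin> A"
  have "(\<exists>k. (insert (j + 1) A, B) = (insert (j + 1) (Aset (j + 3) k), {j + 3 + 3 * k})) \<longleftrightarrow>
        (\<exists>k. (A, B) = (Aset (j + 3) k, {j + 3 + 3 * k}))"
  proof
    assume "\<exists>k. (insert (j + 1) A, B) = (insert (j + 1) (Aset (j + 3) k), {j + 3 + 3 * k})"
    then obtain k where k: "insert (j + 1) A = insert (j + 1) (Aset (j + 3) k)" "B = {j + 3 + 3 * k}" by auto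
    have "A = Aset (j + 3) k" by (rule insert_cancel[OF jA _ k(1)]) (rule Aset_3)
    then show "\<exists>k. (A, B) = (Aset (j + 3) k, {j + 3 + 3 * k})" using k(2) by blast
  qed auto
  then show ?thesis by (simp add: V_eq U_def)
qed

lemma dLx_Uj: "dLx (j + 1) (U j) m = (V (j + 3) m :: 'k::field)"
proof -
  obtain A B where m: "m = (A, B)" by force
  show ?thesis
  proof (cases "j + 1 \<in> A")
    case True
    have "(V (j + 3) (A, B) :: 'k) = 0"
    proof (rule ccontr)
      assume "(V (j + 3) (A, B) :: 'k) \<noteq> 0"
      from V_nzE[OF this] obtain k where "A = Aset (j + 3) k" by metis
      then show False using True Aset_3 by auto
    qed
    then show ?thesis using True by (simp add: m dLx_def)
  next
    case False
    show ?thesis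
    proof (cases "(V (j + 3) (A, B) :: 'k) = 0")
      case True then show ?thesis using False U_ins[where 'k='k, OF False, of B] by (simp add: m dLx_def)
    next
      case nz: False
      from V_nzE[OF nz] obtain k where k: "A = Aset (j + 3) k" by metis
      have "{a \<in> A. a < j + 1} = {}" using k Aset_ge[of _ "j + 3" k] by fastforce
      then have c: "card {a \<in> A. a < j + 1} = 0" by (simp only: card.empty)
      have p: "(-1::'k) ^ card {a \<in> A. a < j + 1} = 1" unfolding c by simp
      show ?thesis using False U_ins[where 'k='k, OF False, of B] p by (simp add: m dLx_def)
    qed
  qed
qed

lemma dRy_V0': "dRy i (V j) ({}, {}) = (if i = j then 1 else (0::'k::field))"
  by (rule dRy_V0)

lemma VU_t1: "smul (dRy i (V (j + 1))) (dLx i (U j)) m = (if i = j + 1 then (V (j + 3) m :: 'k::field) else 0)"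
proof -
  have uniq: "(a1, b1) = ({}, {})" if s: "a1 \<subseteq> fst m" "b1 \<subseteq> snd m" and f: "dRy i (V (j + 1) :: 'k ser) (a1, b1) \<noteq> 0"
      and g: "dLx i (U j :: 'k ser) (fst m - a1, snd m - b1) \<noteq> 0" for a1 b1
  proof -
    from dRy_nz[OF f] have f1: "i \<notin> b1" "(V (j + 1) :: 'k ser) (a1, insert i b1) \<noteq> 0" by auto
    from V_nzE[OF f1(2)] obtain k where k0: "a1 = Aset (j + 1) k" "insert i b1 = {j + 1 + 3 * k}" .
    then have b1: "b1 = {}" "i = j + 1 + 3 * k" using f1(1) by auto
    from dLx_nz[OF g] have g1: "i \<notin> fst m - a1" "(U j :: 'k ser) (insert i (fst m - a1), snd m - b1) \<noteq> 0" by auto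
    from U_nzE[OF g1(2)] obtain l where l0: "insert i (fst m - a1) = insert (j + 1) (Aset (j + 3) l)" by metis
    have "k = 0"
    proof (rule ccontr)
      assume "k \<noteq> 0"
      then have "j + 1 \<in> a1" using k0(1) Aset_j[of "j + 1" k] by auto
      moreover have "j + 1 \<in> insert i (fst m - a1)" using l0 by auto
      moreover have "j + 1 \<noteq> i" using b1(2) \<open>k \<noteq> 0\<close> by simp
      ultimately show False by auto
    qed
    then show "(a1, b1) = ({}, {})" using k0(1) b1 by simp
  qed
  have "smul (dRy i (V (j + 1))) (dLx i (U j :: 'k ser)) m = (if finite (fst m) \<and> finite (snd m)
      then msign ({}, {}) m * dRy i (V (j + 1) :: 'k ser) ({}, {}) * dLx i (U j :: 'k ser) m else 0)"
    using smul_one_term[where p = "({}, {})" and m = m and f = "dRy i (V (j + 1) :: 'k ser)" and g = "dLx i (U j :: 'k ser)", OF uniq]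
    by simp
  also have "\<dots> = (if i = j + 1 then (V (j + 3) m :: 'k) else 0)"
  proof (cases "(V (j + 3) m :: 'k) = 0")
    case True then show ?thesis using dLx_Uj[where 'k='k, of j m] by (auto simp: msign_empty_left dRy_V0)
  next
    case False
    then have "finite (fst m) \<and> finite (snd m)" using V_nzE[of "j + 3" "fst m" "snd m"] by (metis finite_Aset finite.emptyI finite.insertI prod.collapse)
    then show ?thesis using dLx_Uj[where 'k='k, of j m] by (auto simp: msign_empty_left dRy_V0)
  qed
  finally show ?thesis .
qed

lemma VU_t2: "smul (dRx i (V (j + 1))) (dLy i (U j)) m = (0 :: 'k::field)"
proof (rule smul_zero_terms)
  fix a1 b1 assume s: "a1 \<subseteq> fst m" "b1 \<subseteq> snd m" and f: "dRx i (V (j + 1) :: 'k ser) (a1, b1) \<noteq> 0"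
      and g: "dLy i (U j :: 'k ser) (fst m - a1, snd m - b1) \<noteq> 0"
  from dRx_nz[OF f] have f1: "i \<notin> a1" "(V (j + 1) :: 'k ser) (insert i a1, b1) \<noteq> 0" by auto
  from V_nzE[OF f1(2)] obtain k where k0: "insert i a1 = Aset (j + 1) k" by metis
  then have "i \<in> Aset (j + 1) k" by auto
  then obtain n where n: "i = j + 1 + 3 * n \<or> i = j + 1 + 3 * n + 1" unfolding mem_Aset by blast
  from dLy_nz[OF g] have g1: "i \<notin> snd m - b1" "(U j :: 'k ser) (fst m - a1, insert i (snd m - b1)) \<noteq> 0" by auto
  from U_nzE[OF g1(2)] obtain l where l0: "insert i (snd m - b1) = {j + 3 + 3 * l}" by metis
  then have "i = j + 3 + 3 * l" by auto
  then show False using n by presburger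
qed

lemma sbr_VU: "sbr (V (j + 1)) (U j) = (V (j + 3) :: 'k::field ser)"
proof (rule ext)
  fix m
  have "(\<lambda>i. smul (dRy i (V (j + 1))) (dLx i (U j)) m + smul (dRx i (V (j + 1))) (dLy i (U j)) m)
      = (\<lambda>i. if i = j + 1 then (V (j + 3) m :: 'k) else 0)"
  proof (rule ext)
    fix i show "smul (dRy i (V (j + 1))) (dLx i (U j)) m + smul (dRx i (V (j + 1))) (dLy i (U j)) m
      = (if i = j + 1 then (V (j + 3) m :: 'k) else 0)"
      using VU_t1[where 'k='k, of i j m] VU_t2[where 'k='k, of i j m] by simp
  qed
  then have "sbr (V (j + 1)) (U j) m = Sum_any (\<lambda>i. if i = j + 1 then (V (j + 3) m :: 'k) else 0)"
    unfolding sbr_def by (rule arg_cong[where f = Sum_any])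
  also have "\<dots> = V (j + 3) m" by simp
  finally show "sbr (V (j + 1)) (U j) m = (V (j + 3) m :: 'k)" .
qed

lemma U_from_V:
  assumes "(2::'k::field) \<noteq> 0" "V j \<in> (Palg :: 'k ser set)"
  shows "U j \<in> (Palg :: 'k ser set)"
proof -
  have "sscale (1/2) (sbr (V j) (V j)) \<in> (Palg :: 'k ser set)" using assms(2) by (intro Palg.scale Palg.brack)
  moreover have "sscale (1/2) (sbr (V j) (V j)) = (U j :: 'k ser)"
    using assms(1) by (simp add: sbr_VV sscale_sscale)
  ultimately show ?thesis by simp
qed

lemma VU_Palg:
  assumes "(2::'k::field) \<noteq> 0"
  shows "V j \<in> (Palg :: 'k ser set) \<and> U j \<in> (Palg :: 'k ser set)"
proof (induction j rule: less_induct)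
  case (less j)
  have "V j \<in> (Palg :: 'k ser set)"
  proof (cases "j < 3")
    case True then show ?thesis by (rule Palg.gen)
  next
    case False
    then obtain j' where j: "j = j' + 3" by (metis add.commute le_Suc_ex not_less)
    have "V (j' + 1) \<in> (Palg :: 'k ser set)" "U j' \<in> (Palg :: 'k ser set)" using less j by auto
    then have "sbr (V (j' + 1)) (U j') \<in> (Palg :: 'k ser set)" by (rule Palg.brack)
    then show ?thesis unfolding sbr_VU j .
  qed
  then show ?case using U_from_V[OF assms] by blast
qed



section \<open>Low-order parts\<close>

definition low :: "'k::field ser \<Rightarrow> mon \<Rightarrow> 'k \<Rightarrow> bool" where
  "low f p c \<longleftrightarrow> (\<forall>m. finite (fst m) \<and> card (fst m) \<le> 1 \<longrightarrow> f m = (if m = p then c else 0))"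

lemma lowD: "low f p c \<Longrightarrow> finite (fst m) \<Longrightarrow> card (fst m) \<le> 1 \<Longrightarrow> f m = (if m = p then c else 0)"
  unfolding low_def by blast

lemma smul_low:
  assumes f: "low f p c" and g: "low g q d"
    and disj: "fst p \<inter> fst q = {}" "snd p \<inter> snd q = {}"
    and fin: "finite (fst p)" "finite (snd p)" "finite (fst q)" "finite (snd q)"
    and cd: "card (fst p \<union> fst q) \<le> 1"
  shows "low (smul f g) (fst p \<union> fst q, snd p \<union> snd q) (msign p q * c * d)"
  unfolding low_def
proof (intro allI impI)
  fix m :: mon assume m: "finite (fst m) \<and> card (fst m) \<le> 1"
  let ?r = "(fst p \<union> fst q, snd p \<union> snd q)"
  have uniq: "(a1, b1) = p" if "a1 \<subseteq> fst m" "b1 \<subseteq> snd m" "f (a1, b1) \<noteq> 0" "g (fst m - a1, snd m - b1) \<noteq> 0" for a1 b1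
  proof -
    have fa: "finite a1" using that(1) m finite_subset by blast
    have "card a1 \<le> card (fst m)" using that(1) m by (intro card_mono) auto
    then have ca: "card a1 \<le> 1" using m by linarith
    have "f (a1, b1) = (if (a1, b1) = p then c else 0)" using lowD[OF f, of "(a1, b1)"] fa ca by simp
    then show ?thesis using that(3) by (simp split: if_splits)
  qed
  have e: "smul f g m = (if finite (fst m) \<and> finite (snd m) \<and> fst p \<subseteq> fst m \<and> snd p \<subseteq> snd m
      then msign p (fst m - fst p, snd m - snd p) * f p * g (fst m - fst p, snd m - snd p) else 0)"
    by (rule smul_one_term[OF uniq])
  show "smul f g m = (if m = ?r then msign p q * c * d else 0)"
  proof (cases "finite (snd m) \<and> fst p \<subseteq> fst m \<and> snd p \<subseteq> snd m")
    case True
    have fp: "f p = c" using lowD[OF f, of p] fin cd card_mono[of "fst p \<union> fst q" "fst p"] by auto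
    have c1: "finite (fst m - fst p)" "card (fst m - fst p) \<le> 1"
      using m card_mono[of "fst m" "fst m - fst p"] by auto
    have gq: "g (fst m - fst p, snd m - snd p) = (if (fst m - fst p, snd m - snd p) = q then d else 0)"
      using lowD[OF g, of "(fst m - fst p, snd m - snd p)"] c1 by simp
    have iff: "(fst m - fst p, snd m - snd p) = q \<longleftrightarrow> m = ?r"
    proof
      assume "(fst m - fst p, snd m - snd p) = q"
      then show "m = ?r" using True by (auto simp: prod_eq_iff)
    next
      assume "m = ?r"
      then show "(fst m - fst p, snd m - snd p) = q" using disj by (auto simp: prod_eq_iff)
    qed
    show ?thesis unfolding e using True m fp gq iff by (auto simp: prod_eq_iff)
  next
    case False
    then have "m \<noteq> ?r" using fin by auto
    then show ?thesis unfolding e using False by auto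
  qed
qed

lemma smul_low':
  assumes "low f (A, B) c" "low g (C, D) d" "A \<inter> C = {}" "B \<inter> D = {}"
    "finite A" "finite B" "finite C" "finite D" "card (A \<union> C) \<le> 1"
  shows "low (smul f g) (A \<union> C, B \<union> D) (msign (A, B) (C, D) * c * d)"
  using smul_low[OF assms(1,2)] assms(3-9) by simp

lemma low_sone: "low sone ({}, {}) 1"
  unfolding low_def sone_def by auto

lemma low_V: "low (V j :: 'k::field ser) ({}, {j}) 1"
  unfolding low_def
proof (intro allI impI)
  fix m :: mon assume m: "finite (fst m) \<and> card (fst m) \<le> 1"
  show "(V j :: 'k ser) m = (if m = ({}, {j}) then 1 else 0)"
  proof (cases "(V j :: 'k ser) m = 0")
    case False
    then have "(V j :: 'k ser) (fst m, snd m) \<noteq> 0" by simp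
    from V_nzE[OF this] obtain k where k: "fst m = Aset j k" "snd m = {j + 3 * k}" .
    then have "k = 0" using m card_Aset[of j k] by simp
    then have "m = ({}, {j})" using k by (simp add: prod_eq_iff)
    then show ?thesis by (simp add: V_single)
  next
    case True
    moreover have "(V j :: 'k ser) ({}, {j}) = 1" by (simp add: V_single)
    ultimately show ?thesis by auto
  qed
qed

lemma low_U: "low (U j :: 'k::field ser) ({j + 1}, {j + 3}) 1"
  unfolding low_def
proof (intro allI impI)
  fix m :: mon assume m: "finite (fst m) \<and> card (fst m) \<le> 1"
  have u1: "(U j :: 'k ser) ({j + 1}, {j + 3}) = 1" unfolding U_def by (auto intro: exI[of _ 0])
  show "(U j :: 'k ser) m = (if m = ({j + 1}, {j + 3}) then 1 else 0)"
  proof (cases "(U j :: 'k ser) m = 0")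
    case False
    then have "(U j :: 'k ser) (fst m, snd m) \<noteq> 0" by simp
    from U_nzE[OF this] obtain k where k: "fst m = insert (j + 1) (Aset (j + 3) k)" "snd m = {j + 3 + 3 * k}" .
    have "card (fst m) = 2 * k + 1" using k(1) Aset_3(2)[of j k] card_Aset[of "j + 3" k] by simp
    then have "k = 0" using m by simp
    then have "m = ({j + 1}, {j + 3})" using k by (simp add: prod_eq_iff)
    then show ?thesis using u1 by simp
  next
    case True
    then show ?thesis using u1 by auto
  qed
qed

definition Fac :: "nat \<Rightarrow> nat \<Rightarrow> 'k::field ser" where
  "Fac t s = (if t = s then smul (U (3 * s)) (V (3 * s + 1)) else V (3 * t + 3))"

fun G :: "nat \<Rightarrow> nat \<Rightarrow> 'k::field ser" where
  "G 0 s = sone"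
| "G (Suc t) s = smul (G t s) (Fac t s)"

definition Mf :: "nat \<Rightarrow> nat \<Rightarrow> nat set" where
  "Mf t s = (if s < t then {3 * s + 1} else {})"
definition Ms :: "nat \<Rightarrow> nat \<Rightarrow> nat set" where
  "Ms t s = (\<lambda>u. 3 * u + 3) ` {..<t} \<union> Mf t s"

lemma low_Fac: "\<exists>c. c \<noteq> 0 \<and> low (Fac t s :: 'k::field ser) (if t = s then ({3 * s + 1}, {3 * s + 1, 3 * s + 3}) else ({}, {3 * t + 3})) c"
proof (cases "t = s")
  case True
  have "low (smul (U (3 * s)) (V (3 * s + 1)) :: 'k ser)
     ({3 * s + 1} \<union> {}, {3 * s + 3} \<union> {3 * s + 1})
     (msign ({3 * s + 1}, {3 * s + 3}) ({}, {3 * s + 1}) * 1 * 1)"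
    by (rule smul_low'[OF low_U[where 'k='k, of "3 * s"] low_V[where 'k='k]]) auto
  moreover have "msign ({3 * s + 1}, {3 * s + 3}) ({}, {3 * s + 1}) * 1 * 1 \<noteq> (0 :: 'k)"
    by (simp add: msign_def)
  ultimately show ?thesis using True by (auto simp: Fac_def insert_commute)
next
  case False
  then show ?thesis using low_V[of "3 * t + 3"] by (auto simp: Fac_def intro: exI[of _ 1])
qed

lemma low_G: "\<exists>c. c \<noteq> 0 \<and> low (G t s :: 'k::field ser) (Mf t s, Ms t s) c"
proof (induction t)
  case 0
  then show ?case using low_sone by (auto simp: Mf_def Ms_def intro: exI[of _ 1])
next
  case (Suc t)
  from Suc obtain c where c: "c \<noteq> 0" "low (G t s :: 'k ser) (Mf t s, Ms t s) c" by blast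
  obtain c' where c': "c' \<noteq> 0" "low (Fac t s :: 'k ser) (if t = s then ({3 * s + 1}, {3 * s + 1, 3 * s + 3}) else ({}, {3 * t + 3})) c'"
    using low_Fac by blast
  have img: "(\<lambda>u. 3 * u + 3) ` {..<Suc t} = insert (3 * t + 3) ((\<lambda>u. 3 * u + 3) ` {..<t})"
    by (simp add: lessThan_Suc)
  have n1: "3 * t + 3 \<notin> (\<lambda>u. 3 * u + 3) ` {..<t}" by auto
  have n2: "3 * s + 1 \<notin> (\<lambda>u. 3 * u + 3) ` {..<t}"
  proof
    assume "3 * s + 1 \<in> (\<lambda>u. 3 * u + 3) ` {..<t}"
    then obtain u where "3 * s + 1 = 3 * u + 3" by auto
    then show False by presburger
  qed
  have n3: "3 * s + 1 \<noteq> 3 * t + 3" by presburger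
  show ?case
  proof (cases "t = s")
    case True
    have Mt: "Mf t s = {}" "Ms t s = (\<lambda>u. 3 * u + 3) ` {..<t}" using True by (auto simp: Mf_def Ms_def)
    have l: "low (G (Suc t) s :: 'k ser) (Mf t s \<union> {3 * s + 1}, Ms t s \<union> {3 * s + 1, 3 * s + 3})
        (msign (Mf t s, Ms t s) ({3 * s + 1}, {3 * s + 1, 3 * s + 3}) * c * c')"
      unfolding G.simps by (rule smul_low'[OF c(2)]) (use c'(2) True Mt n1 n2 n3 in \<open>auto simp: Ms_def\<close>)
    have "(Mf t s \<union> {3 * s + 1}, Ms t s \<union> {3 * s + 1, 3 * s + 3}) = (Mf (Suc t) s, Ms (Suc t) s)"
      using True Mt img by (auto simp: Mf_def Ms_def)
    moreover have "msign (Mf t s, Ms t s) ({3 * s + 1}, {3 * s + 1, 3 * s + 3}) * c * c' \<noteq> 0"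
      using c c' by (simp add: msign_def)
    ultimately show ?thesis using l by metis
  next
    case False
    have l: "low (G (Suc t) s :: 'k ser) (Mf t s \<union> {}, Ms t s \<union> {3 * t + 3})
        (msign (Mf t s, Ms t s) ({}, {3 * t + 3}) * c * c')"
      unfolding G.simps by (rule smul_low'[OF c(2)]) (use c'(2) False n1 n2 n3 in \<open>auto simp: Ms_def Mf_def card_insert_if\<close>)
    have "(Mf t s \<union> {}, Ms t s \<union> {3 * t + 3}) = (Mf (Suc t) s, Ms (Suc t) s)"
      using False img by (auto simp: Mf_def Ms_def)
    moreover have "msign (Mf t s, Ms t s) ({}, {3 * t + 3}) * c * c' \<noteq> 0"
      using c c' by (simp add: msign_def)
    ultimately show ?thesis using l by metis
  qed
qed



lemma homog_U:
  assumes "(2::'k::field) \<noteq> 0"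
  shows "homog (wv j + wv j) (bv j + bv j - 2) (U j :: 'k ser)"
proof -
  have "homog (wv j + wv j) (bv j + bv j - 2) (sbr (V j) (V j) :: 'k ser)"
    by (rule homog_sbr[OF homog_V homog_V])
  then have "homog (wv j + wv j) (bv j + bv j - 2) (sscale (1/2) (sbr (V j) (V j)) :: 'k ser)"
    by (rule homog_scale)
  moreover have "sscale (1/2) (sbr (V j) (V j)) = (U j :: 'k ser)"
    using assms by (simp add: sbr_VV sscale_sscale)
  ultimately show ?thesis by simp
qed

lemma homog_Fac:
  assumes "(2::'k::field) \<noteq> 0"
  shows "homog (wv (3 * t + 3)) (bv (3 * t + 3) + (if t = s then 2 else 0)) (Fac t s :: 'k ser)"
proof (cases "t = s")
  case True
  have w: "wv (3 * t + 3) = (wv (3 * s) + wv (3 * s)) + wv (3 * s + 1)" using True wv_rec[of "3 * s"] by simp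
  have b: "bv (3 * t + 3) + (if t = s then 2 else 0) = (bv (3 * s) + bv (3 * s) - 2) + bv (3 * s + 1)"
    using True bv_rec[of "3 * s"] by simp
  have f: "(Fac t s :: 'k ser) = smul (U (3 * s)) (V (3 * s + 1))" using True by (simp add: Fac_def)
  show ?thesis unfolding w b f by (rule homog_smul[OF homog_U[OF assms] homog_V])
next
  case False
  then show ?thesis by (simp add: Fac_def homog_V)
qed

lemma homog_G:
  assumes "(2::'k::field) \<noteq> 0"
  shows "homog (\<Sum>u<t. wv (3 * u + 3)) ((\<Sum>u<t. bv (3 * u + 3)) + (if s < t then 2 else 0)) (G t s :: 'k ser)"
proof (induction t)
  case 0
  then show ?case using homog_sone by simp
next
  case (Suc t)
  have w: "(\<Sum>u<Suc t. wv (3 * u + 3)) = (\<Sum>u<t. wv (3 * u + 3)) + wv (3 * t + 3)" by simp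
  have b: "(\<Sum>u<Suc t. bv (3 * u + 3)) + (if s < Suc t then 2 else 0) =
      ((\<Sum>u<t. bv (3 * u + 3)) + (if s < t then 2 else 0)) + (bv (3 * t + 3) + (if t = s then 2 else 0))"
    by auto
  show ?case unfolding w b G.simps by (rule homog_smul[OF Suc homog_Fac[OF assms]])
qed

lemma G_Palg:
  assumes "(2::'k::field) \<noteq> 0"
  shows "(G t s :: 'k ser) \<in> Palg"
proof (induction t)
  case 0 then show ?case by (simp add: Palg.one)
next
  case (Suc t)
  have "(Fac t s :: 'k ser) \<in> Palg"
    unfolding Fac_def using VU_Palg[OF assms] by (auto intro: Palg.mult)
  then show ?case using Suc by (simp add: Palg.mult)
qed

lemma wv_nonneg: "0 \<le> fst (wv j) \<and> 0 \<le> fst (snd (wv j)) \<and> 0 \<le> snd (snd (wv j))"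
  by (induction j rule: wv.induct) auto

lemma bv_nonpos: "bv j \<le> 0"
  by (induction j rule: bv.induct) auto

lemma bv_le: "bv (3 * u + 3) \<le> -4"
  using bv_rec[of "3 * u"] bv_nonpos[of "3 * u"] bv_nonpos[of "3 * u + 1"] by simp

definition WW :: "nat \<Rightarrow> int \<times> int \<times> int" where "WW n = (\<Sum>u<n. wv (3 * u + 3))"
definition DD :: "nat \<Rightarrow> int" where "DD n = (\<Sum>u<n. bv (3 * u + 3)) + 2"
definition dd :: "nat \<Rightarrow> nat \<times> nat \<times> nat \<times> nat" where
  "dd n = (nat (fst (WW n)), nat (fst (snd (WW n))), nat (snd (snd (WW n))), nat (- DD n))"

lemma WW_nonneg: "0 \<le> fst (WW n) \<and> 0 \<le> fst (snd (WW n)) \<and> 0 \<le> snd (snd (WW n))"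
  unfolding WW_def fst_sum snd_sum using wv_nonneg by (auto intro: sum_nonneg)

lemma DD_nonpos: "0 < n \<Longrightarrow> DD n \<le> 0"
proof -
  assume n: "0 < n"
  have "(\<Sum>u<n. bv (3 * u + 3)) \<le> (\<Sum>u<n. -4)" by (rule sum_mono) (rule bv_le)
  also have "\<dots> = - 4 * int n" by simp
  finally show ?thesis using n unfolding DD_def by simp
qed

lemma Wd_dd: "Wd (dd n) = WW n"
  using WW_nonneg[of n] unfolding Wd_def dd_def by (simp add: prod_eq_iff)

lemma n4_dd: "0 < n \<Longrightarrow> - int (n4 (dd n)) = DD n"
  using DD_nonpos[of n] unfolding n4_def dd_def by simp

lemma G_Jdeg:
  assumes "(2::'k::field) \<noteq> 0" "s < n"
  shows "(G n s :: 'k ser, 0) \<in> Jdeg (dd n)"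
proof (rule hom_Kan_Jdeg)
  show "(G n s :: 'k ser, 0) \<in> Kan" unfolding Kan_def using G_Palg[OF assms(1)] zero_Palg by simp
  have "homog (WW n) (DD n) (G n s :: 'k ser)"
    using homog_G[OF assms(1), of n s] assms(2) unfolding WW_def DD_def by simp
  moreover have "0 < n" using assms(2) by simp
  ultimately show "hom (dd n) (G n s :: 'k ser, 0)"
    unfolding hom_def using Wd_dd n4_dd homog_zero by simp
qed

section \<open>Independence\<close>

lemma G_eval:
  assumes "s < n" "s' < n"
  shows "((G n s' :: 'k::field ser) (Mf n s, Ms n s) \<noteq> 0) \<longleftrightarrow> s' = s"
proof -
  obtain c where c: "c \<noteq> 0" "low (G n s' :: 'k ser) (Mf n s', Ms n s') c" using low_G by blast
  have "finite (Mf n s)" "card (Mf n s) \<le> 1" using assms by (auto simp: Mf_def)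
  then have "(G n s' :: 'k ser) (Mf n s, Ms n s) = (if (Mf n s, Ms n s) = (Mf n s', Ms n s') then c else 0)"
    using lowD[OF c(2), of "(Mf n s, Ms n s)"] by simp
  moreover have "(Mf n s, Ms n s) = (Mf n s', Ms n s') \<longleftrightarrow> s' = s" using assms by (auto simp: Mf_def)
  ultimately show ?thesis using c(1) by auto
qed

lemma kscale_fst: "fst (kscale c v) m = c * fst v m"
  by (simp add: kscale_def sscale_def)

lemma family_indep:
  fixes n :: nat
  defines "e \<equiv> (\<lambda>s. (G n s :: 'k::field ser, 0 :: 'k ser))"
  shows "K.independent (e ` {..<n}) \<and> card (e ` {..<n}) = n"
proof
  have inj: "inj_on e {..<n}"
  proof (rule inj_onI)
    fix s s' assume s: "s \<in> {..<n}" "s' \<in> {..<n}" and eq: "e s = e s'"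
    then have "G n s = (G n s' :: 'k ser)" unfolding e_def by simp
    then have "(G n s' :: 'k ser) (Mf n s, Ms n s) \<noteq> 0" using G_eval[where 'k='k, of s n s] s by simp
    then show "s = s'" using G_eval[where 'k='k, of s n s'] s by simp
  qed
  then show "card (e ` {..<n}) = n" by (simp add: card_image)
  show "K.independent (e ` {..<n})"
    unfolding K.dependent_explicit
  proof
    assume "\<exists>T u. finite T \<and> T \<subseteq> e ` {..<n} \<and> (\<Sum>v\<in>T. kscale (u v) v) = 0 \<and> (\<exists>v\<in>T. u v \<noteq> 0)"
    then obtain T u v0 where T: "finite T" "T \<subseteq> e ` {..<n}" "(\<Sum>v\<in>T. kscale (u v) v) = 0" "v0 \<in> T" "u v0 \<noteq> 0"
      by blast
    obtain s0 where s0: "s0 < n" "v0 = e s0" using T(2,4) by blast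
    let ?pt = "(Mf n s0, Ms n s0)"
    have "fst (\<Sum>v\<in>T. kscale (u v) v) ?pt = (\<Sum>v\<in>T. u v * fst v ?pt)"
      by (simp add: fst_sum sum_fun_app kscale_fst)
    also have "\<dots> = u v0 * fst v0 ?pt"
    proof (rule trans[OF sum_single_nz[where a = v0]])
      show "finite T" by fact
      fix v assume v: "v \<in> T" "v \<noteq> v0"
      then obtain s where s: "s < n" "v = e s" using T(2) by blast
      then have "s \<noteq> s0" using v s0 by auto
      then have "(G n s :: 'k ser) ?pt = 0" using G_eval[OF s0(1) s(1)] by auto
      then show "u v * fst v ?pt = 0" using s unfolding e_def by simp
    qed (use T(4) in simp)
    finally have "u v0 * fst v0 ?pt = 0" using T(3) by simp
    moreover have "fst v0 ?pt \<noteq> 0" using G_eval[OF s0(1) s0(1)] s0 unfolding e_def by simp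
    ultimately show False using T(5) by simp
  qed
qed

theorem part3:
  assumes "(2::'k::field) \<noteq> 0"
  shows "\<forall>N. \<exists>d. K.dim (Jdeg d :: 'k kan set) > N"
proof
  fix N
  define n where "n = Suc N"
  define e where "e = (\<lambda>s. (G n s :: 'k ser, 0 :: 'k ser))"
  have fi: "K.independent (e ` {..<n})" "card (e ` {..<n}) = n"
    using family_indep[of n] unfolding e_def by blast+
  have sub: "e ` {..<n} \<subseteq> Jdeg (dd n)" using G_Jdeg[OF assms] unfolding e_def by auto
  have "card (e ` {..<n}) \<le> K.dim (Jdeg (dd n) :: 'k kan set)"
    by (rule dim_lb[OF sub fi(1)]) simp
  then have "K.dim (Jdeg (dd n) :: 'k kan set) > N" using fi(2) unfolding n_def by simp
  then show "\<exists>d. K.dim (Jdeg d :: 'k kan set) > N" by (rule exI)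
qed

theorem corollary12p13:
  assumes "(2::'k::field) \<noteq> 0"
  shows "(Kan :: 'k kan set) = module.span kscale (\<Union>d. Jdeg d)
       \<and> (\<forall>D (u :: nat \<times> nat \<times> nat \<times> nat \<Rightarrow> 'k kan). finite D \<longrightarrow> (\<forall>d\<in>D. u d \<in> Jdeg d)
            \<longrightarrow> (\<Sum>d\<in>D. u d) = 0 \<longrightarrow> (\<forall>d\<in>D. u d = 0))
       \<and> (\<forall>N. \<exists>d. vector_space.dim kscale (Jdeg d :: 'k kan set) > N)"
  using part1 part2 part3[OF assms] by blast


end
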